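(* Let $X=(X(t))_{t\ge0}$ be a centered Gaussian process, self-similar of order $\beta\in(0,1)$, satisfying (H.1) with parameters $\alpha,\lambda,\psi$. Let $\eta>0$ and $M_1,M_2>0$. Then there exist a continuous function $u_2$ and a constant $C>0$ (independent of $s,t$) such that for all $s,t>\eta$ with $\eta\le|s-t|\le M_1(s\wedge t)+M_2$, $$\mathbb{E}\big[(X(t+1)-X(t))(X(s+1)-X(s))\big]=\lambda(s\wedge t)^{2\beta-\alpha}\big(2a_\alpha(s-t)+u_2(s,t)\big),$$ where $|u_2(s,t)|\le C\big((s\wedge t)^{-1}|s-t|^{\alpha-1}+(s\wedge t)^{\alpha-2}\big)$ if $|s-t|\ge1$, and $|u_2(s,t)|\le C\big((s\wedge t)^{\alpha-1}\mathbf{1}_{\{\alpha<1\}}+(s\wedge t)^{\alpha-2}\mathbf{1}_{\{\alpha\ge1\}}\big)$ if $|s-t|<1$.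
   Context: Self-similar of order $\beta$: $(X(ct))_{t\ge0}\overset{law}{=}(c^\beta X(t))_{t\ge0}$ for all $c>0$. $\phi(x)=\mathbb{E}[X(1)X(x)]$, $x\ge1$, so $\mathbb{E}[X(s)X(t)]=s^{2\beta}\phi(t/s)$ for $0<s\le t$. (H.1): there is $\alpha\in(0,2\beta]$ with $\phi(x)=-\lambda(x-1)^\alpha+\psi(x)$, $\lambda>0$, $\psi$ twice differentiable on an open set containing $[1,\infty)$, and $C\ge0$ with, for $x\in(1,\infty)$: $|\psi'(x)|\le Cx^{\alpha-1}$, $|\psi''(x)|\le Cx^{-1}(x-1)^{\alpha-1}$, and $\psi'(1)=\beta\psi(1)$ when $\alpha\ge1$. For $\alpha>0$, $a_\alpha(h)=\frac12(|h-1|^\alpha+|h+1|^\alpha-2|h|^\alpha)$. *)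

theory Defs
  imports "HOL-Probability.Probability"
begin

definition a_alpha :: "real \<Rightarrow> real \<Rightarrow> real" where
  "a_alpha \<alpha> h = (\<bar>h - 1\<bar> powr \<alpha> + \<bar>h + 1\<bar> powr \<alpha> - 2 * \<bar>h\<bar> powr \<alpha>) / 2"

definition gaussian_rv :: "'a measure \<Rightarrow> ('a \<Rightarrow> real) \<Rightarrow> bool" where
  "gaussian_rv M Y \<longleftrightarrow>
     (\<exists>\<mu> \<sigma>. \<sigma> > 0 \<and> distributed M lborel Y (normal_density \<mu> \<sigma>)) \<or>
     (\<exists>c. AE \<omega> in M. Y \<omega> = c)"

definition gaussian_process :: "'a measure \<Rightarrow> (real \<Rightarrow> 'a \<Rightarrow> real) \<Rightarrow> bool" where
  "gaussian_process M X \<longleftrightarrow>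
     (\<forall>t\<ge>0. X t \<in> borel_measurable M) \<and>
     (\<forall>I c. finite I \<longrightarrow> I \<subseteq> {0..} \<longrightarrow> gaussian_rv M (\<lambda>\<omega>. \<Sum>t\<in>I. c t * X t \<omega>))"

definition centered :: "'a measure \<Rightarrow> (real \<Rightarrow> 'a \<Rightarrow> real) \<Rightarrow> bool" where
  "centered M X \<longleftrightarrow> (\<forall>t\<ge>0. integral\<^sup>L M (X t) = 0)"

definition self_similar :: "'a measure \<Rightarrow> (real \<Rightarrow> 'a \<Rightarrow> real) \<Rightarrow> real \<Rightarrow> bool" where
  "self_similar M X \<beta> \<longleftrightarrow>
     (\<forall>c>0. \<forall>I. finite I \<longrightarrow> I \<subseteq> {0..} \<longrightarrow>
        distr M (Pi\<^sub>M I (\<lambda>_. borel)) (\<lambda>\<omega>. \<lambda>t\<in>I. X (c * t) \<omega>) =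
        distr M (Pi\<^sub>M I (\<lambda>_. borel)) (\<lambda>\<omega>. \<lambda>t\<in>I. c powr \<beta> * X t \<omega>))"

definition cov_phi :: "'a measure \<Rightarrow> (real \<Rightarrow> 'a \<Rightarrow> real) \<Rightarrow> real \<Rightarrow> real" where
  "cov_phi M X x = integral\<^sup>L M (\<lambda>\<omega>. X 1 \<omega> * X x \<omega>)"

definition H1 :: "'a measure \<Rightarrow> (real \<Rightarrow> 'a \<Rightarrow> real) \<Rightarrow> real \<Rightarrow> real \<Rightarrow> real \<Rightarrow> (real \<Rightarrow> real) \<Rightarrow> bool" where
  "H1 M X \<beta> \<alpha> lam \<psi> \<longleftrightarrow>
     0 < \<alpha> \<and> \<alpha> \<le> 2 * \<beta> \<and> lam > 0 \<and>
     (\<forall>x\<ge>1. cov_phi M X x = - lam * (x - 1) powr \<alpha> + \<psi> x) \<and>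
     (\<exists>U. open U \<and> {1..} \<subseteq> U \<and>
        (\<forall>x\<in>U. \<psi> differentiable (at x) \<and> deriv \<psi> differentiable (at x))) \<and>
     (\<exists>C\<ge>0. \<forall>x>1. \<bar>deriv \<psi> x\<bar> \<le> C * x powr (\<alpha> - 1) \<and>
                   \<bar>deriv (deriv \<psi>) x\<bar> \<le> C * x powr (-1) * (x - 1) powr (\<alpha> - 1)) \<and>
     (\<alpha> \<ge> 1 \<longrightarrow> deriv \<psi> 1 = \<beta> * \<psi> 1)"

end

theory Submission
  imports Defs
begin


lemma pow_diff:
  fixes x y q :: real
  assumes "0 < y" "y \<le> x"
  shows "\<bar>x powr q - y powr q\<bar> \<le> \<bar>q\<bar> * (x powr (q-1) + y powr (q-1)) * (x - y)"
proof (cases "y = x")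
  case True then show ?thesis by simp
next
  case False
  then have lt: "y < x" using assms by simp
  have "\<And>z. y \<le> z \<Longrightarrow> z \<le> x \<Longrightarrow> ((\<lambda>z. z powr q) has_real_derivative q * z powr (q-1)) (at z)"
    using assms by (intro has_real_derivative_powr) auto
  from MVT2[OF lt this] obtain z where z: "y < z" "z < x" "x powr q - y powr q = (x - y) * (q * z powr (q-1))"
    by blast
  have zb: "z powr (q-1) \<le> x powr (q-1) + y powr (q-1)"
  proof (cases "q - 1 \<ge> 0")
    case True
    then have "z powr (q-1) \<le> x powr (q-1)" using z assms by (intro powr_mono2) auto
    then show ?thesis by (smt (verit) powr_ge_zero)
  next
    case False
    then have "z powr (q-1) \<le> y powr (q-1)" using z assms by (intro powr_mono2') auto
    then show ?thesis by (smt (verit) powr_ge_zero)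
  qed
  have "\<bar>x powr q - y powr q\<bar> = \<bar>q\<bar> * z powr (q-1) * (x - y)"
    using z lt by (simp add: abs_mult)
  also have "\<dots> \<le> \<bar>q\<bar> * (x powr (q-1) + y powr (q-1)) * (x - y)"
    using zb lt by (intro mult_right_mono mult_left_mono) auto
  finally show ?thesis .
qed

lemma pow_scale:
  fixes s z c r :: real
  assumes "0 < s" "s \<le> z" "z \<le> c * s" "1 \<le> c" "\<bar>r\<bar> \<le> 2"
  shows "z powr r \<le> c^2 * s powr r"
proof (cases "r \<ge> 0")
  case True
  have "z powr r \<le> (c * s) powr r" using assms True by (intro powr_mono2) auto
  also have "\<dots> = c powr r * s powr r" using assms by (simp add: powr_mult)
  also have "c powr r \<le> c powr 2" using assms by (intro powr_mono) auto
  then have "c powr r * s powr r \<le> c^2 * s powr r" using assms by (intro mult_right_mono) auto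
  finally show ?thesis .
next
  case False
  have "z powr r \<le> s powr r" using assms False by (intro powr_mono2') auto
  also have "\<dots> \<le> c^2 * s powr r"
  proof -
    have "1 \<le> c^2" using assms by (simp add: one_le_power)
    then show ?thesis using powr_ge_zero[of s r] by (metis mult_1 mult_right_mono)
  qed
  finally show ?thesis .
qed

lemma pow_step:
  fixes H \<alpha> :: real
  assumes "1 \<le> H" "0 < \<alpha>" "\<alpha> \<le> 2"
  shows "0 \<le> H powr \<alpha> - (H-1) powr \<alpha>" "H powr \<alpha> - (H-1) powr \<alpha> \<le> 2 * H powr (\<alpha> - 1)"
proof -
  define y where "y = 1 / H"
  have y: "0 < y" "y \<le> 1" using assms by (auto simp: y_def)
  have Hy: "H - 1 = H * (1 - y)" using assms by (simp add: y_def field_simps)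
  have e: "(H-1) powr \<alpha> = H powr \<alpha> * (1-y) powr \<alpha>"
    unfolding Hy using assms y by (auto intro!: powr_mult)
  have le1: "(1-y) powr \<alpha> \<le> 1" using y assms by (intro powr_le1) auto
  have ge: "(1-y)^2 \<le> (1-y) powr \<alpha>"
  proof -
    have "(1-y) powr 2 \<le> (1-y) powr \<alpha>" using y assms by (intro powr_mono') auto
    then show ?thesis using y by simp
  qed
  have Hp: "0 \<le> H powr \<alpha>" by simp
  show "0 \<le> H powr \<alpha> - (H-1) powr \<alpha>" unfolding e using le1 Hp
    by (simp add: mult_left_le)
  have "H powr \<alpha> - (H-1) powr \<alpha> = H powr \<alpha> * (1 - (1-y) powr \<alpha>)" unfolding e by (simp add: algebra_simps)
  also have "\<dots> \<le> H powr \<alpha> * (2 * y)"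
  proof (rule mult_left_mono[OF _ Hp])
    have "(1-y)^2 = 1 - 2*y + y^2" by (simp add: power2_eq_square algebra_simps)
    then show "1 - (1-y) powr \<alpha> \<le> 2 * y" using ge y by (smt (verit) zero_le_power2)
  qed
  also have "\<dots> = 2 * H powr (\<alpha> - 1)"
    using assms by (simp add: y_def powr_diff)
  finally show "H powr \<alpha> - (H-1) powr \<alpha> \<le> 2 * H powr (\<alpha> - 1)" .
qed

lemma compare_deriv:
  fixes f g f' g' :: "real \<Rightarrow> real" and a b :: real
  assumes "a \<le> b"
    and df: "\<And>x. a \<le> x \<Longrightarrow> x \<le> b \<Longrightarrow> (f has_real_derivative f' x) (at x)"
    and dg: "\<And>x. a \<le> x \<Longrightarrow> x \<le> b \<Longrightarrow> (g has_real_derivative g' x) (at x)"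
    and bd: "\<And>x. a < x \<Longrightarrow> x < b \<Longrightarrow> \<bar>f' x\<bar> \<le> g' x"
  shows "\<bar>f b - f a\<bar> \<le> g b - g a"
proof (cases "a = b")
  case True then show ?thesis by simp
next
  case False
  then have lt: "a < b" using assms by simp
  have d1: "\<And>x. a \<le> x \<Longrightarrow> x \<le> b \<Longrightarrow> ((\<lambda>x. f x - g x) has_real_derivative f' x - g' x) (at x)"
    using df dg by (intro derivative_intros) auto
  have d2: "\<And>x. a \<le> x \<Longrightarrow> x \<le> b \<Longrightarrow> ((\<lambda>x. f x + g x) has_real_derivative f' x + g' x) (at x)"
    using df dg by (intro derivative_intros) auto
  from MVT2[OF lt d1] obtain z where z: "a < z" "z < b" "(f b - g b) - (f a - g a) = (b - a) * (f' z - g' z)" by blast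
  from MVT2[OF lt d2] obtain w where w: "a < w" "w < b" "(f b + g b) - (f a + g a) = (b - a) * (f' w + g' w)" by blast
  have "f' z - g' z \<le> 0" using bd[of z] z by auto
  then have "(b - a) * (f' z - g' z) \<le> 0" using lt by (simp add: mult_nonneg_nonpos)
  moreover have "f' w + g' w \<ge> 0" using bd[of w] w by auto
  then have "(b - a) * (f' w + g' w) \<ge> 0" using lt by simp
  ultimately show ?thesis using z(3) w(3) by linarith
qed


locale psi_ctx =
  fixes \<psi> d\<psi> dd\<psi> :: "real \<Rightarrow> real" and \<alpha> \<beta> C :: real
  assumes al: "0 < \<alpha>" "\<alpha> \<le> 2*\<beta>" "\<beta> < 1" "0 < \<beta>" and C: "0 \<le> C"
    and d1: "\<And>x. 1 \<le> x \<Longrightarrow> (\<psi> has_real_derivative d\<psi> x) (at x)"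
    and d2: "\<And>x. 1 \<le> x \<Longrightarrow> (d\<psi> has_real_derivative dd\<psi> x) (at x)"
    and b1: "\<And>x. 1 < x \<Longrightarrow> \<bar>d\<psi> x\<bar> \<le> C * x powr (\<alpha>-1)"
    and b2: "\<And>x. 1 < x \<Longrightarrow> \<bar>dd\<psi> x\<bar> \<le> C * x powr (-1) * (x-1) powr (\<alpha>-1)"
    and bc: "1 \<le> \<alpha> \<Longrightarrow> d\<psi> 1 = \<beta> * \<psi> 1"

context psi_ctx
begin

lemma tay1:
  assumes "\<alpha> < 1" "0 \<le> e"
  shows "\<bar>\<psi> (1+e) - \<psi> 1\<bar> \<le> C * e"
proof -
  have "\<bar>\<psi> (1+e) - \<psi> 1\<bar> \<le> C * (1+e) - C * 1"
  proof (rule compare_deriv[of 1 "1+e" \<psi> d\<psi> "\<lambda>x. C * x" "\<lambda>_. C"])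
    show "1 \<le> 1 + e" using assms by simp
    show "(\<psi> has_real_derivative d\<psi> x) (at x)" if "1 \<le> x" for x using d1 that by simp
    show "((\<lambda>x. C * x) has_real_derivative C) (at x)" for x by (auto intro!: derivative_eq_intros)
    show "\<bar>d\<psi> x\<bar> \<le> C" if "1 < x" "x < 1+e" for x
    proof -
      have "x powr (\<alpha>-1) \<le> x powr 0" using that assms by (intro powr_mono) auto
      then have "x powr (\<alpha>-1) \<le> 1" using that by simp
      then have "C * x powr (\<alpha>-1) \<le> C" using C by (rule mult_left_le)
      then show ?thesis using b1[of x] that by linarith
    qed
  qed
  then show ?thesis by (simp add: algebra_simps)
qed

lemma dd_bound: assumes "1 \<le> \<alpha>" "1 < x" shows "\<bar>dd\<psi> x\<bar> \<le> C"
proof -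
  have "(x-1) powr (\<alpha>-1) \<le> x powr (\<alpha>-1)" using assms by (intro powr_mono2) auto
  then have "x powr (-1) * (x-1) powr (\<alpha>-1) \<le> x powr (-1) * x powr (\<alpha>-1)"
    by (intro mult_left_mono) auto
  also have "\<dots> = x powr (\<alpha> - 2)" using powr_add[of x "-1" "\<alpha>-1"] by simp
  also have "\<dots> \<le> x powr 0" using assms al by (intro powr_mono) auto
  finally have "x powr (-1) * (x-1) powr (\<alpha>-1) \<le> 1" using assms by simp
  then have "C * (x powr (-1) * (x-1) powr (\<alpha>-1)) \<le> C" using C by (rule mult_left_le)
  then show ?thesis using b2[of x] assms by (simp add: mult.assoc)
qed

lemma tay2:
  assumes "1 \<le> \<alpha>" "0 \<le> e"
  shows "\<bar>\<psi> (1+e) - \<psi> 1 - d\<psi> 1 * e\<bar> \<le> C * e^2"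
proof -
  have inner: "\<bar>d\<psi> x - d\<psi> 1\<bar> \<le> C * (x - 1)" if "1 \<le> x" for x
  proof -
    have "\<bar>d\<psi> x - d\<psi> 1\<bar> \<le> C * x - C * 1"
    proof (rule compare_deriv[of 1 x d\<psi> dd\<psi> "\<lambda>x. C * x" "\<lambda>_. C"])
      show "1 \<le> x" by fact
      show "(d\<psi> has_real_derivative dd\<psi> y) (at y)" if "1 \<le> y" for y using d2 that by simp
      show "((\<lambda>x. C * x) has_real_derivative C) (at y)" for y by (auto intro!: derivative_eq_intros)
      show "\<bar>dd\<psi> y\<bar> \<le> C" if "1 < y" "y < x" for y using dd_bound[OF assms(1)] that by simp
    qed
    then show ?thesis by (simp add: algebra_simps)
  qed
  have "\<bar>(\<psi> (1+e) - \<psi> 1 - d\<psi> 1 * ((1+e) - 1)) - (\<psi> 1 - \<psi> 1 - d\<psi> 1 * (1 - 1))\<bar>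
        \<le> C * ((1+e) - 1)^2 - C * (1 - 1)^2"
  proof (rule compare_deriv[of 1 "1+e" "\<lambda>x. \<psi> x - \<psi> 1 - d\<psi> 1 * (x - 1)" "\<lambda>x. d\<psi> x - d\<psi> 1"
          "\<lambda>x. C * (x - 1)^2" "\<lambda>x. 2 * C * (x - 1)"])
    show "1 \<le> 1 + e" using assms by simp
    show "((\<lambda>x. \<psi> x - \<psi> 1 - d\<psi> 1 * (x - 1)) has_real_derivative d\<psi> x - d\<psi> 1) (at x)" if "1 \<le> x" for x
      using d1[OF that] by (auto intro!: derivative_eq_intros)
    show "((\<lambda>x. C * (x - 1)^2) has_real_derivative 2 * C * (x - 1)) (at x)" for x
      by (auto intro!: derivative_eq_intros)
    show "\<bar>d\<psi> x - d\<psi> 1\<bar> \<le> 2 * C * (x - 1)" if "1 < x" "x < 1+e" for x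
    proof -
      have "0 \<le> C * (x - 1)" using C that by simp
      then show ?thesis using inner[of x] that by linarith
    qed
  qed
  then show ?thesis by simp
qed

lemma dcomp:
  assumes "0 < k" "1 \<le> b / k"
  shows "((\<lambda>b. \<psi> (b / k)) has_real_derivative d\<psi> (b / k) * (1 / k)) (at b)"
proof -
  have "((\<lambda>b. b / k) has_real_derivative 1 / k) (at b)" using assms by (auto intro!: derivative_eq_intros)
  from DERIV_chain2[OF d1[OF assms(2)] this] show ?thesis .
qed

end


lemma rho_bound:
  fixes \<eta> s g x :: real
  assumes "0 < \<eta>" "\<eta> < s" "0 \<le> g" "g \<le> 2" "s \<le> x" "x \<le> s + 1"
  shows "0 \<le> x powr g / s powr g - 1" "x powr g / s powr g - 1 \<le> (2 + 1/\<eta>) / s"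
proof -
  have s0: "0 < s" using assms by simp
  have q: "x powr g / s powr g = (x/s) powr g" using s0 assms by (simp add: powr_divide)
  have r1: "1 \<le> x / s" using assms s0 by simp
  have r2: "x / s \<le> 1 + 1/s" using assms s0 by (simp add: field_simps)
  have "1 \<le> (x/s) powr g" using r1 assms by (intro ge_one_powr_ge_zero) auto
  then show "0 \<le> x powr g / s powr g - 1" using q by simp
  have "(x/s) powr g \<le> (x/s) powr 2" using r1 assms by (intro powr_mono) auto
  also have "\<dots> = (x/s)^2" using r1 by simp
  also have "\<dots> \<le> (1 + 1/s)^2" using r1 r2 by (intro power_mono) auto
  also have "\<dots> = 1 + 2/s + (1/s) * (1/s)" by (simp add: power2_eq_square algebra_simps)
  also have "\<dots> \<le> 1 + 2/s + (1/\<eta>) * (1/s)"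
  proof -
    have "(1/s) * (1/s) \<le> (1/\<eta>) * (1/s)"
      using assms s0 by (intro mult_right_mono) (auto simp: field_simps)
    then show ?thesis by linarith
  qed
  also have "1 + 2/s + (1/\<eta>) * (1/s) = 1 + (2 + 1/\<eta>) / s" using assms s0 by (simp add: field_simps)
  finally have "(x/s) powr g \<le> 1 + (2 + 1/\<eta>) / s" .
  then show "x powr g / s powr g - 1 \<le> (2 + 1/\<eta>) / s" using q by simp
qed

lemma a_alpha_neg_ge1:
  assumes "1 \<le> h" shows "2 * a_alpha \<alpha> (s - (s + h)) = (h+1) powr \<alpha> + (h-1) powr \<alpha> - 2 * h powr \<alpha>"
proof -
  have "\<bar>-h - 1\<bar> = h + 1" "\<bar>-h + 1\<bar> = h - 1" "\<bar>-h\<bar> = h" using assms by auto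
  then show ?thesis by (simp add: a_alpha_def add.commute)
qed

lemma a_alpha_neg_lt1:
  assumes "0 \<le> h" "h \<le> 1" shows "2 * a_alpha \<alpha> (s - (s + h)) = (h+1) powr \<alpha> + (1-h) powr \<alpha> - 2 * h powr \<alpha>"
proof -
  have "\<bar>-h - 1\<bar> = h + 1" "\<bar>-h + 1\<bar> = 1 - h" "\<bar>-h\<bar> = h" using assms by auto
  then show ?thesis by (simp add: a_alpha_def add.commute)
qed

lemma L_ge1:
  fixes \<eta> s h \<gamma> \<alpha> :: real
  assumes "0 < \<eta>" "\<eta> < s" "1 \<le> h" "0 \<le> \<gamma>" "\<gamma> \<le> 2" "0 < \<alpha>" "\<alpha> \<le> 2"
  shows "\<bar>- ((s+1) powr \<gamma> * h powr \<alpha> - s powr \<gamma> * (h+1) powr \<alpha> - (s+1) powr \<gamma> * (h-1) powr \<alpha>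
            + s powr \<gamma> * h powr \<alpha>) / s powr \<gamma> - 2 * a_alpha \<alpha> (s - (s + h))\<bar>
         \<le> 2 * (2 + 1/\<eta>) * (s powr (-1) * h powr (\<alpha> - 1))"
proof -
  have s0: "0 < s" using assms by simp
  define \<rho> where "\<rho> = (s+1) powr \<gamma> / s powr \<gamma>"
  have sp: "0 < s powr \<gamma>" using s0 by simp
  have e: "- ((s+1) powr \<gamma> * h powr \<alpha> - s powr \<gamma> * (h+1) powr \<alpha> - (s+1) powr \<gamma> * (h-1) powr \<alpha>
            + s powr \<gamma> * h powr \<alpha>) / s powr \<gamma> - 2 * a_alpha \<alpha> (s - (s + h))
        = - (\<rho> - 1) * (h powr \<alpha> - (h-1) powr \<alpha>)"
    unfolding a_alpha_neg_ge1[OF assms(3)] \<rho>_def using sp by (simp add: field_simps)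
  have r: "0 \<le> \<rho> - 1" "\<rho> - 1 \<le> (2 + 1/\<eta>) / s"
    unfolding \<rho>_def using rho_bound[of \<eta> s \<gamma> "s+1"] assms by auto
  have p: "0 \<le> h powr \<alpha> - (h-1) powr \<alpha>" "h powr \<alpha> - (h-1) powr \<alpha> \<le> 2 * h powr (\<alpha> - 1)"
    using pow_step[of h \<alpha>] assms by auto
  have "\<bar>- (\<rho> - 1) * (h powr \<alpha> - (h-1) powr \<alpha>)\<bar> = (\<rho> - 1) * (h powr \<alpha> - (h-1) powr \<alpha>)"
    using r p by (simp add: abs_mult)
  also have "\<dots> \<le> ((2 + 1/\<eta>) / s) * (2 * h powr (\<alpha> - 1))"
    using r p by (intro mult_mono) auto
  also have "\<dots> = 2 * (2 + 1/\<eta>) * (s powr (-1) * h powr (\<alpha> - 1))"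
    using s0 by (simp add: powr_minus field_simps)
  finally show ?thesis unfolding e .
qed

lemma L_lt1:
  fixes \<eta> s h \<gamma> \<alpha> :: real
  assumes "0 < \<eta>" "\<eta> < s" "0 \<le> h" "h \<le> 1" "0 \<le> \<gamma>" "\<gamma> \<le> 2" "0 < \<alpha>"
  shows "\<bar>- ((s+1) powr \<gamma> * h powr \<alpha> - s powr \<gamma> * (h+1) powr \<alpha> - (s+h) powr \<gamma> * (1-h) powr \<alpha>
            + s powr \<gamma> * h powr \<alpha>) / s powr \<gamma> - 2 * a_alpha \<alpha> (s - (s + h))\<bar>
         \<le> 2 * (2 + 1/\<eta>) / s"
proof -
  have s0: "0 < s" using assms by simp
  define \<rho> where "\<rho> = (s+1) powr \<gamma> / s powr \<gamma>"
  define \<tau> where "\<tau> = (s+h) powr \<gamma> / s powr \<gamma>"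
  have sp: "0 < s powr \<gamma>" using s0 by simp
  have e: "- ((s+1) powr \<gamma> * h powr \<alpha> - s powr \<gamma> * (h+1) powr \<alpha> - (s+h) powr \<gamma> * (1-h) powr \<alpha>
            + s powr \<gamma> * h powr \<alpha>) / s powr \<gamma> - 2 * a_alpha \<alpha> (s - (s + h))
        = - (\<rho> - 1) * h powr \<alpha> + (\<tau> - 1) * (1-h) powr \<alpha>"
    unfolding a_alpha_neg_lt1[OF assms(3,4)] \<rho>_def \<tau>_def using sp by (simp add: field_simps)
  have r: "0 \<le> \<rho> - 1" "\<rho> - 1 \<le> (2 + 1/\<eta>) / s"
    unfolding \<rho>_def using rho_bound[of \<eta> s \<gamma> "s+1"] assms by auto
  have t: "0 \<le> \<tau> - 1" "\<tau> - 1 \<le> (2 + 1/\<eta>) / s"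
    unfolding \<tau>_def using rho_bound[of \<eta> s \<gamma> "s+h"] assms by auto
  have h1: "h powr \<alpha> \<le> 1" "(1-h) powr \<alpha> \<le> 1" using assms by (auto intro!: powr_le1)
  have a1: "\<bar>- (\<rho> - 1) * h powr \<alpha>\<bar> = (\<rho> - 1) * h powr \<alpha>" using r by (simp add: abs_mult)
  have a2: "\<bar>(\<tau> - 1) * (1-h) powr \<alpha>\<bar> = (\<tau> - 1) * (1-h) powr \<alpha>" using t by (simp add: abs_mult)
  have "\<bar>- (\<rho> - 1) * h powr \<alpha> + (\<tau> - 1) * (1-h) powr \<alpha>\<bar> \<le> (\<rho> - 1) * h powr \<alpha> + (\<tau> - 1) * (1-h) powr \<alpha>"
    using abs_triangle_ineq[of "- (\<rho> - 1) * h powr \<alpha>" "(\<tau> - 1) * (1-h) powr \<alpha>"] unfolding a1 a2 .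
  also have "\<dots> \<le> (\<rho> - 1) * 1 + (\<tau> - 1) * 1"
    using r t h1 by (intro add_mono mult_left_mono) auto
  also have "\<dots> \<le> 2 * (2 + 1/\<eta>) / s"
  proof -
    have "2 * (2 + 1/\<eta>) / s = (2 + 1/\<eta>) / s + (2 + 1/\<eta>) / s" by (simp add: field_simps)
    then show ?thesis using r t by (simp only: mult_1_right)
  qed
  finally show ?thesis unfolding e .
qed


lemma powr_id1:
  fixes a z b al :: real
  assumes "0 < a" "0 < z"
  shows "a powr (2*b-2) * (z/a) powr (al-1) = a powr (2*b-al-1) * z powr (al-1)"
proof -
  have e: "2*b-al-1 = (2*b-2) - (al-1)" by simp
  show ?thesis unfolding e powr_diff using assms by (simp add: powr_divide) (simp add: mult_ac)
qed

lemma powr_id2: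
  fixes a z b al :: real
  assumes "0 < a" "a < z"
  shows "a powr (2*b-1) * ((z/a) powr (-1) * (z/a - 1) powr (al-1)) * (z / a^2)
       = a powr (2*b-al-1) * (z - a) powr (al-1)"
proof -
  have a0: "a \<noteq> 0" "z \<noteq> 0" using assms by auto
  have e1: "(z/a) powr (-1) = a / z" using assms by (simp add: powr_minus_divide powr_one)
  have e2: "z/a - 1 = (z - a) / a" using assms by (simp add: field_simps)
  have e3: "((z - a) / a) powr (al-1) = (z - a) powr (al-1) / a powr (al-1)"
    using assms by (simp add: powr_divide)
  have e4: "2*b-al-1 = ((2*b-1) - (al-1)) - 1" by simp
  have e5: "a powr (2*b-al-1) = a powr (2*b-1) / a powr (al-1) / a"
    unfolding e4 powr_diff using assms by (simp add: powr_one)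
  show ?thesis unfolding e1 e2 e3 e5 using assms by (simp add: field_simps power2_eq_square)
qed

context psi_ctx
begin

lemma P_ge1:
  fixes \<eta> s t c1 :: real
  assumes e: "0 < \<eta>" "\<eta> < s" and st: "s + 1 \<le> t" and c1: "t + 1 \<le> c1 * s" "1 \<le> c1"
  shows "\<bar>(s+1) powr (2*\<beta>) * \<psi> ((t+1)/(s+1)) - s powr (2*\<beta>) * \<psi> ((t+1)/s)
          - (s+1) powr (2*\<beta>) * \<psi> (t/(s+1)) + s powr (2*\<beta>) * \<psi> (t/s)\<bar>
       \<le> C * (1 + 2/\<eta>)^2 * (1 + 2/\<alpha>) * c1 * (s powr (2*\<beta>-\<alpha>-1) * ((t-s) powr (\<alpha>-1) + s powr (\<alpha>-1)))"
proof -
  define c0 where "c0 = (1 + 2/\<eta>)^2"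
  define \<gamma>1 where "\<gamma>1 = 2*\<beta>-\<alpha>-1"
  have s0: "0 < s" using e by simp
  have c0s: "s + 2 \<le> (1 + 2/\<eta>) * s"
  proof -
    have "2 \<le> 2 * s / \<eta>" using e by (simp add: field_simps)
    then show ?thesis by (simp add: algebra_simps)
  qed
  define H where "H = (\<lambda>b. (s+1) powr (2*\<beta>) * \<psi> (b/(s+1)) - s powr (2*\<beta>) * \<psi> (b/s))"
  define H' where "H' = (\<lambda>b. (s+1) powr (2*\<beta>) * (d\<psi> (b/(s+1)) * (1/(s+1))) - s powr (2*\<beta>) * (d\<psi> (b/s) * (1/s)))"
  have dH: "(H has_real_derivative H' b) (at b)" if "t \<le> b" "b \<le> t + 1" for b
  proof -
    have "1 \<le> b/(s+1)" "1 \<le> b/s" using that st s0 by (auto simp: field_simps)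
    then show ?thesis unfolding H_def H'_def using s0
      by (intro DERIV_diff DERIV_cmult dcomp) auto
  qed
  obtain \<zeta> where z: "t < \<zeta>" "\<zeta> < t + 1" "H (t+1) - H t = (t + 1 - t) * H' \<zeta>"
    using MVT2[of t "t+1" H H'] dH by auto
  have Pe: "(s+1) powr (2*\<beta>) * \<psi> ((t+1)/(s+1)) - s powr (2*\<beta>) * \<psi> ((t+1)/s)
          - (s+1) powr (2*\<beta>) * \<psi> (t/(s+1)) + s powr (2*\<beta>) * \<psi> (t/s) = H' \<zeta>"
    using z(3) unfolding H_def by simp
  define K where "K = (\<lambda>a. a powr (2*\<beta>-1) * d\<psi> (\<zeta>/a))"
  have pw: "a powr (2*\<beta>) * (1/a) = a powr (2*\<beta>-1)" if "0 < a" for a :: real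
    using that by (simp add: powr_diff powr_one)
  have pw2: "a powr (2*\<beta>) * (d\<psi> (\<zeta>/a) * (1/a)) = a powr (2*\<beta>-1) * d\<psi> (\<zeta>/a)" if "0 < a" for a :: real
    using pw[OF that] by (metis mult.commute mult.left_commute)
  have HK: "H' \<zeta> = K (s+1) - K s"
    unfolding H'_def K_def using pw2[of s] pw2[of "s+1"] s0 by simp
  define K' where "K' = (\<lambda>a. a powr (2*\<beta>-1) * (dd\<psi> (\<zeta>/a) * (-\<zeta>/a^2)) + (2*\<beta>-1) * a powr (2*\<beta>-1-1) * d\<psi> (\<zeta>/a))"
  have dK: "(K has_real_derivative K' a) (at a)" if "s \<le> a" "a \<le> s + 1" for a
  proof -
    have a0: "0 < a" using that s0 by simp
    have x1: "1 \<le> \<zeta>/a" using that z st a0 by (simp add: field_simps)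
    have dq: "((\<lambda>a. \<zeta>/a) has_real_derivative -\<zeta>/a^2) (at a)"
      using a0 by (auto intro!: derivative_eq_intros simp: power2_eq_square field_simps)
    have d3: "((\<lambda>a. d\<psi> (\<zeta>/a)) has_real_derivative dd\<psi> (\<zeta>/a) * (-\<zeta>/a^2)) (at a)"
      by (rule DERIV_chain2[OF d2[OF x1] dq])
    have d4: "((\<lambda>a. a powr (2*\<beta>-1)) has_real_derivative (2*\<beta>-1) * a powr (2*\<beta>-1-1)) (at a)"
      using a0 by (rule has_real_derivative_powr)
    show ?thesis unfolding K_def K'_def by (rule DERIV_mult'[OF d4 d3])
  qed
  define B where "B = c0 * C * s powr \<gamma>1"
  define G where "G = (\<lambda>a. B * (\<zeta> powr (\<alpha>-1) * a - (\<zeta> - a) powr \<alpha> / \<alpha>))"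
  define G' where "G' = (\<lambda>a. B * (\<zeta> powr (\<alpha>-1) + (\<zeta> - a) powr (\<alpha>-1)))"
  have dG: "(G has_real_derivative G' a) (at a)" if "s \<le> a" "a \<le> s + 1" for a
  proof -
    have za: "0 < \<zeta> - a" using that z st by simp
    have d5: "((\<lambda>a. (\<zeta> - a) powr \<alpha>) has_real_derivative \<alpha> * (\<zeta> - a) powr (\<alpha> - 1) * (-1)) (at a)"
    proof (rule DERIV_chain2[where f="\<lambda>x. x powr \<alpha>"])
      show "((\<lambda>x. x powr \<alpha>) has_real_derivative \<alpha> * (\<zeta> - a) powr (\<alpha> - 1)) (at (\<zeta> - a))"
        using za by (rule has_real_derivative_powr)
      show "((\<lambda>a. \<zeta> - a) has_real_derivative -1) (at a)" by (auto intro!: derivative_eq_intros)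
    qed
    have "(G has_real_derivative B * (\<zeta> powr (\<alpha>-1) * 1 - \<alpha> * (\<zeta> - a) powr (\<alpha> - 1) * (-1) / \<alpha>)) (at a)"
      unfolding G_def by (intro DERIV_cmult DERIV_diff DERIV_cdivide[OF d5] DERIV_cmult DERIV_ident)
    then show ?thesis unfolding G'_def using al by simp
  qed
  have Bnn: "0 \<le> B" unfolding B_def c0_def using C by simp
  have bK: "\<bar>K' a\<bar> \<le> G' a" if "s < a" "a < s + 1" for a
  proof -
    have a0: "0 < a" using that s0 by simp
    have x1: "1 < \<zeta>/a" using that z st a0 by (simp add: field_simps)
    have za: "a < \<zeta>" using that z st by simp
    have sc: "a powr \<gamma>1 \<le> c0 * s powr \<gamma>1"
      unfolding c0_def using pow_scale[of s a "1 + 2/\<eta>" \<gamma>1] that s0 c0s al e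
      by (auto simp: \<gamma>1_def)
    have t1: "\<bar>(2*\<beta>-1) * a powr (2*\<beta>-1-1) * d\<psi> (\<zeta>/a)\<bar> \<le> C * a powr \<gamma>1 * \<zeta> powr (\<alpha>-1)"
    proof -
      have "\<bar>(2*\<beta>-1) * a powr (2*\<beta>-1-1) * d\<psi> (\<zeta>/a)\<bar> = \<bar>2*\<beta>-1\<bar> * (a powr (2*\<beta>-2) * \<bar>d\<psi> (\<zeta>/a)\<bar>)"
        by (simp add: abs_mult)
      also have "\<dots> \<le> 1 * (a powr (2*\<beta>-2) * (C * (\<zeta>/a) powr (\<alpha>-1)))"
        using al b1[OF x1] by (intro mult_mono) auto
      also have "\<dots> = C * (a powr (2*\<beta>-2) * (\<zeta>/a) powr (\<alpha>-1))" by simp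
      also have "\<dots> = C * a powr \<gamma>1 * \<zeta> powr (\<alpha>-1)"
        using powr_id1[of a \<zeta> \<beta> \<alpha>] a0 za by (simp add: \<gamma>1_def)
      finally show ?thesis .
    qed
    have t2: "\<bar>a powr (2*\<beta>-1) * (dd\<psi> (\<zeta>/a) * (-\<zeta>/a^2))\<bar> \<le> C * a powr \<gamma>1 * (\<zeta> - a) powr (\<alpha>-1)"
    proof -
      have "\<bar>a powr (2*\<beta>-1) * (dd\<psi> (\<zeta>/a) * (-\<zeta>/a^2))\<bar> = a powr (2*\<beta>-1) * \<bar>dd\<psi> (\<zeta>/a)\<bar> * (\<zeta>/a^2)"
        using a0 za by (simp add: abs_mult)
      also have "\<dots> \<le> a powr (2*\<beta>-1) * (C * (\<zeta>/a) powr (-1) * (\<zeta>/a - 1) powr (\<alpha>-1)) * (\<zeta>/a^2)"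
        using b2[OF x1] a0 za by (intro mult_right_mono mult_left_mono) auto
      also have "\<dots> = C * (a powr (2*\<beta>-1) * ((\<zeta>/a) powr (-1) * (\<zeta>/a - 1) powr (\<alpha>-1)) * (\<zeta> / a^2))"
        by (simp add: mult_ac)
      also have "\<dots> = C * a powr \<gamma>1 * (\<zeta> - a) powr (\<alpha>-1)"
        unfolding powr_id2[OF a0 za] \<gamma>1_def by simp
      finally show ?thesis .
    qed
    have "\<bar>K' a\<bar> \<le> C * a powr \<gamma>1 * (\<zeta> - a) powr (\<alpha>-1) + C * a powr \<gamma>1 * \<zeta> powr (\<alpha>-1)"
      unfolding K'_def by (rule order_trans[OF abs_triangle_ineq add_mono[OF t2 t1]])
    also have "\<dots> = C * a powr \<gamma>1 * (\<zeta> powr (\<alpha>-1) + (\<zeta> - a) powr (\<alpha>-1))" by (simp add: algebra_simps)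
    also have "\<dots> \<le> C * (c0 * s powr \<gamma>1) * (\<zeta> powr (\<alpha>-1) + (\<zeta> - a) powr (\<alpha>-1))"
      using sc C by (intro mult_right_mono mult_left_mono) auto
    also have "\<dots> = G' a" unfolding G'_def B_def by (simp add: mult_ac)
    finally show ?thesis .
  qed
  have cmp: "\<bar>K (s+1) - K s\<bar> \<le> G (s+1) - G s"
    by (rule compare_deriv[of s "s+1" K K' G G']) (use dK dG bK in auto)
  have Gd: "G (s+1) - G s = B * (\<zeta> powr (\<alpha>-1) + ((\<zeta>-s) powr \<alpha> - ((\<zeta>-s) - 1) powr \<alpha>) / \<alpha>)"
    unfolding G_def by (simp add: algebra_simps diff_divide_distrib)
  have ps: "(\<zeta>-s) powr \<alpha> - ((\<zeta>-s) - 1) powr \<alpha> \<le> 2 * (\<zeta>-s) powr (\<alpha>-1)"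
    using pow_step(2)[of "\<zeta>-s" \<alpha>] z st al by auto
  have h0: "0 < t - s" using st by simp
  have key: "\<zeta> powr (\<alpha>-1) + 2/\<alpha> * (\<zeta>-s) powr (\<alpha>-1) \<le> (1 + 2/\<alpha>) * c1 * ((t-s) powr (\<alpha>-1) + s powr (\<alpha>-1))"
  proof (cases "\<alpha> < 1")
    case True
    have q1: "\<zeta> powr (\<alpha>-1) \<le> (t-s) powr (\<alpha>-1)" using True h0 z s0 by (intro powr_mono2') auto
    have q2: "(\<zeta>-s) powr (\<alpha>-1) \<le> (t-s) powr (\<alpha>-1)" using True h0 z s0 by (intro powr_mono2') auto
    have "\<zeta> powr (\<alpha>-1) + 2/\<alpha> * (\<zeta>-s) powr (\<alpha>-1) \<le> (t-s) powr (\<alpha>-1) + 2/\<alpha> * (t-s) powr (\<alpha>-1)"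
      using q1 q2 al by (intro add_mono mult_left_mono) auto
    also have "\<dots> = (1 + 2/\<alpha>) * (t-s) powr (\<alpha>-1)" by (simp add: algebra_simps)
    also have "\<dots> \<le> (1 + 2/\<alpha>) * c1 * ((t-s) powr (\<alpha>-1) + s powr (\<alpha>-1))"
    proof -
      have "(t-s) powr (\<alpha>-1) \<le> (t-s) powr (\<alpha>-1) + s powr (\<alpha>-1)" by simp
      also have "\<dots> \<le> c1 * ((t-s) powr (\<alpha>-1) + s powr (\<alpha>-1))"
        using mult_right_mono[OF c1(2), of "(t-s) powr (\<alpha>-1) + s powr (\<alpha>-1)"] by simp
      finally have "(t-s) powr (\<alpha>-1) \<le> c1 * ((t-s) powr (\<alpha>-1) + s powr (\<alpha>-1))" .
      then show ?thesis using al by (simp add: mult.assoc mult_left_mono)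
    qed
    finally show ?thesis .
  next
    case False
    have zz: "\<zeta> \<le> c1 * s" using z c1 by simp
    have q1: "\<zeta> powr (\<alpha>-1) \<le> (c1 * s) powr (\<alpha>-1)" using False zz z s0 st by (intro powr_mono2) auto
    also have "\<dots> = c1 powr (\<alpha>-1) * s powr (\<alpha>-1)" using c1 s0 by (simp add: powr_mult)
    also have "\<dots> \<le> c1 * s powr (\<alpha>-1)"
    proof -
      have "c1 powr (\<alpha>-1) \<le> c1 powr 1" using c1 al by (intro powr_mono) auto
      then show ?thesis using c1 by (simp add: mult_right_mono)
    qed
    finally have q1': "\<zeta> powr (\<alpha>-1) \<le> c1 * s powr (\<alpha>-1)" .
    have q2: "(\<zeta>-s) powr (\<alpha>-1) \<le> \<zeta> powr (\<alpha>-1)" using False z s0 st by (intro powr_mono2) auto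
    have "\<zeta> powr (\<alpha>-1) + 2/\<alpha> * (\<zeta>-s) powr (\<alpha>-1) \<le> c1 * s powr (\<alpha>-1) + 2/\<alpha> * (c1 * s powr (\<alpha>-1))"
      using q1' q2 al by (intro add_mono mult_left_mono) auto
    also have "\<dots> = (1 + 2/\<alpha>) * c1 * s powr (\<alpha>-1)" by (simp add: algebra_simps)
    also have "\<dots> \<le> (1 + 2/\<alpha>) * c1 * ((t-s) powr (\<alpha>-1) + s powr (\<alpha>-1))"
      using al c1 by (intro mult_left_mono) auto
    finally show ?thesis .
  qed
  have "\<bar>H' \<zeta>\<bar> \<le> B * (\<zeta> powr (\<alpha>-1) + 2/\<alpha> * (\<zeta>-s) powr (\<alpha>-1))"
  proof -
    have "((\<zeta>-s) powr \<alpha> - ((\<zeta>-s) - 1) powr \<alpha>) / \<alpha> \<le> 2/\<alpha> * (\<zeta>-s) powr (\<alpha>-1)"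
      using divide_right_mono[OF ps, of \<alpha>] al by simp
    then have "G (s+1) - G s \<le> B * (\<zeta> powr (\<alpha>-1) + 2/\<alpha> * (\<zeta>-s) powr (\<alpha>-1))"
      unfolding Gd using Bnn by (intro mult_left_mono) auto
    then show ?thesis using cmp HK by simp
  qed
  also have "\<dots> \<le> B * ((1 + 2/\<alpha>) * c1 * ((t-s) powr (\<alpha>-1) + s powr (\<alpha>-1)))"
    using key Bnn by (rule mult_left_mono)
  also have "\<dots> = C * (1 + 2/\<eta>)^2 * (1 + 2/\<alpha>) * c1 * (s powr (2*\<beta>-\<alpha>-1) * ((t-s) powr (\<alpha>-1) + s powr (\<alpha>-1)))"
    unfolding B_def c0_def \<gamma>1_def by (simp add: mult_ac)
  finally show ?thesis unfolding Pe .
qed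

end


lemma abs5: "\<bar>a + b - c - d + e\<bar> \<le> \<bar>a\<bar> + \<bar>b\<bar> + \<bar>c\<bar> + \<bar>d\<bar> + \<bar>e::real\<bar>"
  by (smt (verit))

context psi_ctx
begin

lemma lt1_setup:
  fixes \<eta> s t :: real
  assumes e: "0 < \<eta>" "\<eta> < s" and st: "s < t" "t < s + 1"
  shows "0 \<le> (t+1)/(s+1) - 1" "(t+1)/(s+1) - 1 \<le> 2/s"
    "0 \<le> (t+1)/s - 1" "(t+1)/s - 1 \<le> 2/s"
    "0 \<le> (s+1)/t - 1" "(s+1)/t - 1 \<le> 2/s"
    "0 \<le> t/s - 1" "t/s - 1 \<le> 2/s"
    "(s+1) powr (2*\<beta>) \<le> (1+2/\<eta>)^2 * s powr (2*\<beta>)"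
    "t powr (2*\<beta>) \<le> (1+2/\<eta>)^2 * s powr (2*\<beta>)"
    "s powr (2*\<beta>) \<le> (1+2/\<eta>)^2 * s powr (2*\<beta>)"
    "1 \<le> (1+2/\<eta>)^2"
proof -
  have s0: "0 < s" using e by simp
  have c0s: "s + 2 \<le> (1 + 2/\<eta>) * s"
  proof -
    have "2 \<le> 2 * s / \<eta>" using e by (simp add: field_simps)
    then show ?thesis by (simp add: algebra_simps)
  qed
  have c1: "1 \<le> 1 + 2/\<eta>" using e by simp
  have st2: "s * t \<le> s * s + s" using s0 st mult_left_mono[of t "s+1" s] by (simp add: algebra_simps)
  show "0 \<le> (t+1)/(s+1) - 1" "(t+1)/(s+1) - 1 \<le> 2/s"
    "0 \<le> (t+1)/s - 1" "(t+1)/s - 1 \<le> 2/s"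
    "0 \<le> t/s - 1" "t/s - 1 \<le> 2/s"
    using s0 st st2 by (auto simp: field_simps)
  show "0 \<le> (s+1)/t - 1" using s0 st by (auto simp: field_simps)
  have "(s+1)/t - 1 = (s + 1 - t)/t" using s0 st by (simp add: field_simps)
  also have "\<dots> \<le> 1/t" using s0 st by (intro divide_right_mono) auto
  also have "\<dots> \<le> 1/s" using s0 st by (intro divide_left_mono) auto
  also have "\<dots> \<le> 2/s" using s0 by (intro divide_right_mono) auto
  finally show "(s+1)/t - 1 \<le> 2/s" .
  show "(s+1) powr (2*\<beta>) \<le> (1+2/\<eta>)^2 * s powr (2*\<beta>)"
    using pow_scale[of s "s+1" "1+2/\<eta>" "2*\<beta>"] s0 c0s c1 al by auto
  show "t powr (2*\<beta>) \<le> (1+2/\<eta>)^2 * s powr (2*\<beta>)"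
    using pow_scale[of s t "1+2/\<eta>" "2*\<beta>"] s0 st c0s c1 al by auto
  show "s powr (2*\<beta>) \<le> (1+2/\<eta>)^2 * s powr (2*\<beta>)"
    using pow_scale[of s s "1+2/\<eta>" "2*\<beta>"] s0 st c0s c1 al by auto
  show "1 \<le> (1+2/\<eta>)^2" using c1 by (simp add: one_le_power)
qed

lemma P_lt1_a:
  fixes \<eta> s t :: real
  assumes a1: "\<alpha> < 1" and e: "0 < \<eta>" "\<eta> < s" and st: "s < t" "t < s + 1"
  shows "\<bar>(s+1) powr (2*\<beta>) * \<psi> ((t+1)/(s+1)) - s powr (2*\<beta>) * \<psi> ((t+1)/s)
          - t powr (2*\<beta>) * \<psi> ((s+1)/t) + s powr (2*\<beta>) * \<psi> (t/s)\<bar>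
       \<le> (4 * (1+2/\<eta>)^2 * \<bar>\<psi> 1\<bar> + 8 * C * (1+2/\<eta>)^2) * s powr (2*\<beta>-1)"
proof -
  define c0 where "c0 = (1+2/\<eta>)^2"
  have s0: "0 < s" using e by simp
  note S = lt1_setup[OF e st, folded c0_def]
  define A where "A = s + 1"
  have r: "\<bar>\<psi> x - \<psi> 1\<bar> \<le> C * (2/s)" if "0 \<le> x - 1" "x - 1 \<le> 2/s" for x
  proof -
    have "\<bar>\<psi> (1 + (x-1)) - \<psi> 1\<bar> \<le> C * (x-1)" using tay1[OF a1 that(1)] .
    also have "\<dots> \<le> C * (2/s)" using that C by (intro mult_left_mono) auto
    finally show ?thesis by simp
  qed
  have w: "\<bar>a * (\<psi> x - \<psi> 1)\<bar> \<le> c0 * s powr (2*\<beta>) * (C * (2/s))"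
    if "0 \<le> a" "a \<le> c0 * s powr (2*\<beta>)" "0 \<le> x - 1" "x - 1 \<le> 2/s" for a x
  proof -
    have "\<bar>a * (\<psi> x - \<psi> 1)\<bar> = a * \<bar>\<psi> x - \<psi> 1\<bar>" using that by (simp add: abs_mult)
    also have "\<dots> \<le> c0 * s powr (2*\<beta>) * (C * (2/s))"
      using r[OF that(3,4)] that by (intro mult_mono) auto
    finally show ?thesis .
  qed
  have w1: "\<bar>(s+1) powr (2*\<beta>) * (\<psi> ((t+1)/(s+1)) - \<psi> 1)\<bar> \<le> c0 * s powr (2*\<beta>) * (C * (2/s))"
    using w S by auto
  have w2: "\<bar>s powr (2*\<beta>) * (\<psi> ((t+1)/s) - \<psi> 1)\<bar> \<le> c0 * s powr (2*\<beta>) * (C * (2/s))"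
    using w S by auto
  have w3: "\<bar>t powr (2*\<beta>) * (\<psi> ((s+1)/t) - \<psi> 1)\<bar> \<le> c0 * s powr (2*\<beta>) * (C * (2/s))"
    using w S by auto
  have w4: "\<bar>s powr (2*\<beta>) * (\<psi> (t/s) - \<psi> 1)\<bar> \<le> c0 * s powr (2*\<beta>) * (C * (2/s))"
    using w S by auto
  have E0: "\<bar>(s+1) powr (2*\<beta>) - t powr (2*\<beta>)\<bar> \<le> 4 * c0 * s powr (2*\<beta>-1)"
  proof -
    have "\<bar>(s+1) powr (2*\<beta>) - t powr (2*\<beta>)\<bar> \<le> \<bar>2*\<beta>\<bar> * ((s+1) powr (2*\<beta>-1) + t powr (2*\<beta>-1)) * (s + 1 - t)"
      using pow_diff[of t "s+1" "2*\<beta>"] st s0 by auto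
    also have "\<dots> \<le> 2 * (c0 * s powr (2*\<beta>-1) + c0 * s powr (2*\<beta>-1)) * 1"
    proof (intro mult_mono add_mono)
      have c0s: "s + 2 \<le> (1 + 2/\<eta>) * s"
      proof -
        have "2 \<le> 2 * s / \<eta>" using e by (simp add: field_simps)
        then show ?thesis by (simp add: algebra_simps)
      qed
      show "(s+1) powr (2*\<beta>-1) \<le> c0 * s powr (2*\<beta>-1)"
        unfolding c0_def using pow_scale[of s "s+1" "1+2/\<eta>" "2*\<beta>-1"] s0 c0s e al by auto
      show "t powr (2*\<beta>-1) \<le> c0 * s powr (2*\<beta>-1)"
        unfolding c0_def using pow_scale[of s t "1+2/\<eta>" "2*\<beta>-1"] s0 st c0s e al by auto
    qed (use al st in \<open>auto simp: c0_def\<close>)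
    finally show ?thesis by simp
  qed
  have eq: "(s+1) powr (2*\<beta>) * \<psi> ((t+1)/(s+1)) - s powr (2*\<beta>) * \<psi> ((t+1)/s)
          - t powr (2*\<beta>) * \<psi> ((s+1)/t) + s powr (2*\<beta>) * \<psi> (t/s)
        = \<psi> 1 * ((s+1) powr (2*\<beta>) - t powr (2*\<beta>))
          + (s+1) powr (2*\<beta>) * (\<psi> ((t+1)/(s+1)) - \<psi> 1) - s powr (2*\<beta>) * (\<psi> ((t+1)/s) - \<psi> 1)
          - t powr (2*\<beta>) * (\<psi> ((s+1)/t) - \<psi> 1) + s powr (2*\<beta>) * (\<psi> (t/s) - \<psi> 1)"
    by (simp add: algebra_simps)
  have m: "\<bar>\<psi> 1 * ((s+1) powr (2*\<beta>) - t powr (2*\<beta>))\<bar> \<le> \<bar>\<psi> 1\<bar> * (4 * c0 * s powr (2*\<beta>-1))"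
    unfolding abs_mult using E0 by (intro mult_left_mono) auto
  have ss: "s powr (2*\<beta>) * (C * (2/s)) = 2 * C * s powr (2*\<beta>-1)"
    using s0 by (simp add: powr_diff powr_one)
  have "\<bar>(s+1) powr (2*\<beta>) * \<psi> ((t+1)/(s+1)) - s powr (2*\<beta>) * \<psi> ((t+1)/s)
          - t powr (2*\<beta>) * \<psi> ((s+1)/t) + s powr (2*\<beta>) * \<psi> (t/s)\<bar>
       \<le> \<bar>\<psi> 1\<bar> * (4 * c0 * s powr (2*\<beta>-1)) + 4 * (c0 * s powr (2*\<beta>) * (C * (2/s)))"
    unfolding eq by (rule order_trans[OF abs5], rule order_trans[OF add_mono[OF add_mono[OF add_mono[OF add_mono[OF m w1] w2] w3] w4]]) (simp add: mult_ac)
  also have "\<dots> = (4 * c0 * \<bar>\<psi> 1\<bar> + 8 * C * c0) * s powr (2*\<beta>-1)"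
    using ss by (simp add: algebra_simps)
  finally show ?thesis unfolding c0_def .
qed


lemma P_lt1_b:
  fixes \<eta> s t :: real
  assumes a1: "1 \<le> \<alpha>" and e: "0 < \<eta>" "\<eta> < s" and st: "s < t" "t < s + 1"
  shows "\<bar>(s+1) powr (2*\<beta>) * \<psi> ((t+1)/(s+1)) - s powr (2*\<beta>) * \<psi> ((t+1)/s)
          - t powr (2*\<beta>) * \<psi> ((s+1)/t) + s powr (2*\<beta>) * \<psi> (t/s)\<bar>
       \<le> (6 * (1+2/\<eta>)^2 * \<bar>\<psi> 1\<bar> + 16 * C * (1+2/\<eta>)^2) * s powr (2*\<beta>-2)"
proof -
  define c0 where "c0 = (1+2/\<eta>)^2"
  define p where "p = 2*\<beta>"
  have s0: "0 < s" using e by simp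
  note S = lt1_setup[OF e st, folded c0_def]
  have c0s: "s + 2 \<le> (1 + 2/\<eta>) * s"
  proof -
    have "2 \<le> 2 * s / \<eta>" using e by (simp add: field_simps)
    then show ?thesis by (simp add: algebra_simps)
  qed
  have sc: "z powr r \<le> c0 * s powr r" if "s \<le> z" "z \<le> s + 2" "\<bar>r\<bar> \<le> 2" for z r
    unfolding c0_def using pow_scale[of s z "1+2/\<eta>" r] that s0 c0s e by auto
  define R where "R = (\<lambda>x. \<psi> x - \<psi> 1 - d\<psi> 1 * (x - 1))"
  have r: "\<bar>R x\<bar> \<le> C * (4/s^2)" if "0 \<le> x - 1" "x - 1 \<le> 2/s" for x
  proof -
    have "\<bar>\<psi> (1 + (x-1)) - \<psi> 1 - d\<psi> 1 * (x-1)\<bar> \<le> C * (x-1)^2" using tay2[OF a1 that(1)] .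
    also have "\<dots> \<le> C * (2/s)^2" using that C by (intro mult_left_mono power_mono) auto
    finally show ?thesis by (simp add: R_def power_divide)
  qed
  have w: "\<bar>a * R x\<bar> \<le> c0 * s powr p * (C * (4/s^2))"
    if "0 \<le> a" "a \<le> c0 * s powr p" "0 \<le> x - 1" "x - 1 \<le> 2/s" for a x
  proof -
    have "\<bar>a * R x\<bar> = a * \<bar>R x\<bar>" using that by (simp add: abs_mult)
    also have "\<dots> \<le> c0 * s powr p * (C * (4/s^2))"
      using r[OF that(3,4)] that by (intro mult_mono) auto
    finally show ?thesis .
  qed
  have w1: "\<bar>(s+1) powr p * R ((t+1)/(s+1))\<bar> \<le> c0 * s powr p * (C * (4/s^2))"
    using w S unfolding p_def by auto
  have w2: "\<bar>s powr p * R ((t+1)/s)\<bar> \<le> c0 * s powr p * (C * (4/s^2))"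
    using w S unfolding p_def by auto
  have w3: "\<bar>t powr p * R ((s+1)/t)\<bar> \<le> c0 * s powr p * (C * (4/s^2))"
    using w S unfolding p_def by auto
  have w4: "\<bar>s powr p * R (t/s)\<bar> \<le> c0 * s powr p * (C * (4/s^2))"
    using w S unfolding p_def by auto
  define u1 where "u1 = (s+1) powr (p-1)"
  define u2 where "u2 = s powr (p-1)"
  define u3 where "u3 = t powr (p-1)"
  have pu: "x powr p = x * x powr (p-1)" if "0 < x" for x :: real
    using that powr_add[of x 1 "p-1"] by (simp add: powr_one)
  have t0: "0 < t" using st s0 by simp
  have s1: "0 < s + 1" using s0 by simp
  define E0 where "E0 = (s+1) powr p - t powr p"
  define E1 where "E1 = (s+1) powr p * ((t+1)/(s+1) - 1) - s powr p * ((t+1)/s - 1)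
      - t powr p * ((s+1)/t - 1) + s powr p * (t/s - 1)"
  have E1e: "E1 = u1 * (t-s) - u2 * (t-s+1) - u3 * (s+1-t) + u2 * (t-s)"
  proof -
    have k1: "(s+1) * u1 * ((t+1)/(s+1) - 1) = u1 * (t-s)" using s1 by (simp add: field_simps)
    have k2: "s * u2 * ((t+1)/s - 1) = u2 * (t-s+1)" using s0 by (simp add: field_simps)
    have k3: "t * u3 * ((s+1)/t - 1) = u3 * (s+1-t)" using t0 by (simp add: field_simps)
    have k4: "s * u2 * (t/s - 1) = u2 * (t-s)" using s0 by (simp add: field_simps)
    show ?thesis unfolding E1_def pu[OF s0] pu[OF t0] pu[OF s1] u1_def[symmetric] u2_def[symmetric] u3_def[symmetric]
      k1 k2 k3 k4 ..
  qed
  have pd: "\<bar>x powr (p-1) - y powr (p-1)\<bar> \<le> 2 * c0 * s powr (p-2) * (x - y)"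
    if "s \<le> y" "y \<le> x" "x \<le> s + 2" for x y
  proof -
    have "\<bar>x powr (p-1) - y powr (p-1)\<bar> \<le> \<bar>p-1\<bar> * (x powr (p-1-1) + y powr (p-1-1)) * (x - y)"
      using pow_diff[of y x "p-1"] that s0 by auto
    also have "\<dots> \<le> 1 * (c0 * s powr (p-2) + c0 * s powr (p-2)) * (x - y)"
    proof (intro mult_mono add_mono)
      show "x powr (p-1-1) \<le> c0 * s powr (p-2)" using sc[of x "p-2"] that al unfolding p_def by auto
      show "y powr (p-1-1) \<le> c0 * s powr (p-2)" using sc[of y "p-2"] that al unfolding p_def by auto
    qed (use al that in \<open>auto simp: p_def c0_def\<close>)
    finally show ?thesis by simp
  qed
  have T0: "\<bar>E0 - p * u3 * (s+1-t)\<bar> \<le> 4 * c0 * s powr (p-2)"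
  proof -
    have "\<And>x. t \<le> x \<Longrightarrow> x \<le> s+1 \<Longrightarrow> ((\<lambda>z. z powr p) has_real_derivative p * x powr (p-1)) (at x)"
      using t0 by (intro has_real_derivative_powr) auto
    from MVT2[OF st(2) this] obtain \<xi> where xi: "t < \<xi>" "\<xi> < s+1"
      "(s+1) powr p - t powr p = (s + 1 - t) * (p * \<xi> powr (p-1))" by blast
    have "E0 - p * u3 * (s+1-t) = (s+1-t) * p * (\<xi> powr (p-1) - t powr (p-1))"
      unfolding E0_def xi(3) u3_def by (simp add: algebra_simps)
    also have "\<bar>\<dots>\<bar> = (s+1-t) * p * \<bar>\<xi> powr (p-1) - t powr (p-1)\<bar>"
      using st al unfolding p_def by (simp add: abs_mult)
    also have "\<dots> \<le> 1 * 2 * (2 * c0 * s powr (p-2) * 1)"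
    proof (intro mult_mono)
      show "\<bar>\<xi> powr (p-1) - t powr (p-1)\<bar> \<le> 2 * c0 * s powr (p-2) * 1"
      proof -
        have "2 * c0 * s powr (p-2) * (\<xi> - t) \<le> 2 * c0 * s powr (p-2) * 1"
          using xi st by (intro mult_left_mono) (auto simp: c0_def)
        then show ?thesis using pd[of t \<xi>] xi st by linarith
      qed
    qed (use al st xi in \<open>auto simp: p_def c0_def\<close>)
    finally show ?thesis by simp
  qed
  have T1: "\<bar>u3 - u2\<bar> \<le> 2 * c0 * s powr (p-2)"
  proof -
    have "2 * c0 * s powr (p-2) * (t - s) \<le> 2 * c0 * s powr (p-2) * 1"
      using st by (intro mult_left_mono) (auto simp: c0_def)
    then show ?thesis using pd[of s t] st unfolding u3_def u2_def by linarith
  qed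
  have T2: "\<bar>u1 - u2\<bar> \<le> 2 * c0 * s powr (p-2)"
    using pd[of s "s+1"] unfolding u1_def u2_def by simp
  have E01: "E0 + \<beta> * E1 = (E0 - p * u3 * (s+1-t)) + \<beta> * (s+1-t) * (u3 - u2) + \<beta> * (t-s) * (u1 - u2)"
    unfolding E1e p_def by (simp add: algebra_simps)
  have bE: "\<bar>E0 + \<beta> * E1\<bar> \<le> 6 * c0 * s powr (p-2)"
  proof -
    have q1: "\<bar>\<beta> * (s+1-t) * (u3 - u2)\<bar> \<le> \<beta> * (s+1-t) * (2 * c0 * s powr (p-2))"
    proof -
      have "\<bar>\<beta> * (s+1-t) * (u3 - u2)\<bar> = (\<beta> * (s+1-t)) * \<bar>u3 - u2\<bar>" using al st by (simp add: abs_mult)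
      also have "\<dots> \<le> (\<beta> * (s+1-t)) * (2 * c0 * s powr (p-2))" using T1 al st by (intro mult_left_mono) auto
      finally show ?thesis .
    qed
    have q2: "\<bar>\<beta> * (t-s) * (u1 - u2)\<bar> \<le> \<beta> * (t-s) * (2 * c0 * s powr (p-2))"
    proof -
      have "\<bar>\<beta> * (t-s) * (u1 - u2)\<bar> = (\<beta> * (t-s)) * \<bar>u1 - u2\<bar>" using al st by (simp add: abs_mult)
      also have "\<dots> \<le> (\<beta> * (t-s)) * (2 * c0 * s powr (p-2))" using T2 al st by (intro mult_left_mono) auto
      finally show ?thesis .
    qed
    have q3: "\<beta> * (s+1-t) * (2 * c0 * s powr (p-2)) + \<beta> * (t-s) * (2 * c0 * s powr (p-2))
        = \<beta> * (2 * c0 * s powr (p-2))" by (simp add: algebra_simps)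
    have q4: "\<beta> * (2 * c0 * s powr (p-2)) \<le> 2 * c0 * s powr (p-2)"
      using al by (intro mult_left_le_one_le) (auto simp: c0_def)
    have tri: "\<bar>x + y + z\<bar> \<le> \<bar>x\<bar> + \<bar>y\<bar> + \<bar>z\<bar>" for x y z :: real
      by (rule order_trans[OF abs_triangle_ineq add_right_mono[OF abs_triangle_ineq]])
    show ?thesis unfolding E01 by (rule order_trans[OF tri]) (use T0 q1 q2 q3 q4 in linarith)
  qed
  have eq: "(s+1) powr (2*\<beta>) * \<psi> ((t+1)/(s+1)) - s powr (2*\<beta>) * \<psi> ((t+1)/s)
          - t powr (2*\<beta>) * \<psi> ((s+1)/t) + s powr (2*\<beta>) * \<psi> (t/s)
        = \<psi> 1 * (E0 + \<beta> * E1)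
          + (s+1) powr p * R ((t+1)/(s+1)) - s powr p * R ((t+1)/s)
          - t powr p * R ((s+1)/t) + s powr p * R (t/s)"
    unfolding R_def E0_def E1_def p_def using bc[OF a1] by (simp add: algebra_simps)
  have m: "\<bar>\<psi> 1 * (E0 + \<beta> * E1)\<bar> \<le> \<bar>\<psi> 1\<bar> * (6 * c0 * s powr (p-2))"
    unfolding abs_mult using bE by (intro mult_left_mono) auto
  have ss: "s powr p * (C * (4/s^2)) = 4 * C * s powr (p-2)"
  proof -
    have "s powr (p-2) = s powr p / s^2" using s0 by (simp add: powr_diff)
    then show ?thesis by simp
  qed
  have "\<bar>(s+1) powr (2*\<beta>) * \<psi> ((t+1)/(s+1)) - s powr (2*\<beta>) * \<psi> ((t+1)/s)
          - t powr (2*\<beta>) * \<psi> ((s+1)/t) + s powr (2*\<beta>) * \<psi> (t/s)\<bar>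
       \<le> \<bar>\<psi> 1\<bar> * (6 * c0 * s powr (p-2)) + 4 * (c0 * s powr p * (C * (4/s^2)))"
    unfolding eq by (rule order_trans[OF abs5], rule order_trans[OF add_mono[OF add_mono[OF add_mono[OF add_mono[OF m w1] w2] w3] w4]]) (simp add: mult_ac)
  also have "\<dots> = (6 * c0 * \<bar>\<psi> 1\<bar> + 16 * C * c0) * s powr (2*\<beta>-2)"
  proof -
    have "c0 * s powr p * (C * (4/s^2)) = c0 * (4 * C * s powr (p-2))" using ss by (simp only: mult.assoc)
    then show ?thesis unfolding p_def by (simp add: algebra_simps)
  qed
  finally show ?thesis unfolding c0_def .
qed

end


definition Rf :: "(real \<Rightarrow> real) \<Rightarrow> real \<Rightarrow> real \<Rightarrow> real \<Rightarrow> real" where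
  "Rf \<phi> \<beta> a b = (min a b) powr (2*\<beta>) * \<phi> (max a b / min a b)"

definition Dd :: "(real \<Rightarrow> real) \<Rightarrow> real \<Rightarrow> real \<Rightarrow> real \<Rightarrow> real" where
  "Dd \<phi> \<beta> s t = Rf \<phi> \<beta> (t+1) (s+1) - Rf \<phi> \<beta> (t+1) s - Rf \<phi> \<beta> t (s+1) + Rf \<phi> \<beta> t s"

lemma Rf_sym: "Rf \<phi> \<beta> a b = Rf \<phi> \<beta> b a"
  unfolding Rf_def by (simp add: min.commute max.commute)

lemma Dd_sym: "Dd \<phi> \<beta> s t = Dd \<phi> \<beta> t s"
  unfolding Dd_def using Rf_sym by (metis (no_types, lifting) add.commute diff_add_eq diff_diff_eq)

lemma Rf_split:
  fixes a b lam \<alpha> \<beta> :: real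
  assumes "0 < a" "a \<le> b" "\<phi> (b/a) = - lam * (b/a - 1) powr \<alpha> + \<psi> (b/a)"
  shows "Rf \<phi> \<beta> a b = - lam * a powr (2*\<beta>-\<alpha>) * (b-a) powr \<alpha> + a powr (2*\<beta>) * \<psi> (b/a)"
proof -
  have m: "min a b = a" "max a b = b" using assms by auto
  have e1: "(b/a - 1) powr \<alpha> = (b-a) powr \<alpha> / a powr \<alpha>"
  proof -
    have "b/a - 1 = (b-a)/a" using assms by (simp add: field_simps)
    then show ?thesis using assms by (simp add: powr_divide)
  qed
  have e2: "a powr (2*\<beta>-\<alpha>) = a powr (2*\<beta>) / a powr \<alpha>" by (rule powr_diff)
  show ?thesis unfolding Rf_def m assms(3) e1 e2 by (simp add: algebra_simps)
qed


context psi_ctx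
begin

lemma case_ge1:
  fixes \<phi> :: "real \<Rightarrow> real" and lam \<eta> M1 M2 s t :: real
  assumes phi: "\<And>x. 1 \<le> x \<Longrightarrow> \<phi> x = - lam * (x-1) powr \<alpha> + \<psi> x"
    and lam: "0 < lam" and e: "0 < \<eta>" "\<eta> < s" and M: "0 \<le> M1" "0 \<le> M2"
    and st: "s + 1 \<le> t" "t - s \<le> M1 * s + M2"
  shows "\<bar>Dd \<phi> \<beta> s t / (lam * s powr (2*\<beta>-\<alpha>)) - 2 * a_alpha \<alpha> (s - t)\<bar>
     \<le> (2*(2+1/\<eta>) + C*(1+2/\<eta>)^2*(1+2/\<alpha>)*(1+M1+(M2+1)/\<eta>)/lam)
        * (s powr (-1) * (t-s) powr (\<alpha>-1) + s powr (\<alpha>-2))"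
proof -
  define \<gamma> where "\<gamma> = 2*\<beta>-\<alpha>"
  define c1 where "c1 = 1+M1+(M2+1)/\<eta>"
  define h where "h = t - s"
  have s0: "0 < s" using e by simp
  have h1: "1 \<le> h" using st by (simp add: h_def)
  have tt: "t = s + h" by (simp add: h_def)
  have c1g: "1 \<le> c1" using M e by (simp add: c1_def)
  have c1s: "t + 1 \<le> c1 * s"
  proof -
    have "(M2 + 1) * 1 \<le> (M2 + 1) * (s / \<eta>)" using e M by (intro mult_left_mono) auto
    then have "M2 + 1 \<le> (M2 + 1) * (s / \<eta>)" by simp
    then have "M2 + 1 \<le> (M2+1)/\<eta> * s" by (simp add: field_simps)
    then show ?thesis using st unfolding c1_def by (simp add: algebra_simps)
  qed
  have R1: "Rf \<phi> \<beta> (t+1) (s+1) = - lam * (s+1) powr \<gamma> * h powr \<alpha> + (s+1) powr (2*\<beta>) * \<psi> ((t+1)/(s+1))"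
    unfolding Rf_sym[of \<phi> \<beta> "t+1"] \<gamma>_def
    using Rf_split[of "s+1" "t+1" \<phi> lam \<alpha> \<psi> \<beta>] phi[of "(t+1)/(s+1)"] s0 st by (simp add: h_def)
  have R2: "Rf \<phi> \<beta> (t+1) s = - lam * s powr \<gamma> * (h+1) powr \<alpha> + s powr (2*\<beta>) * \<psi> ((t+1)/s)"
    unfolding Rf_sym[of \<phi> \<beta> "t+1"] \<gamma>_def
    using Rf_split[of s "t+1" \<phi> lam \<alpha> \<psi> \<beta>] phi[of "(t+1)/s"] s0 st by (simp add: h_def algebra_simps)
  have R3: "Rf \<phi> \<beta> t (s+1) = - lam * (s+1) powr \<gamma> * (h-1) powr \<alpha> + (s+1) powr (2*\<beta>) * \<psi> (t/(s+1))"
    unfolding Rf_sym[of \<phi> \<beta> "t"] \<gamma>_def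
    using Rf_split[of "s+1" t \<phi> lam \<alpha> \<psi> \<beta>] phi[of "t/(s+1)"] s0 st by (simp add: h_def algebra_simps)
  have R4: "Rf \<phi> \<beta> t s = - lam * s powr \<gamma> * h powr \<alpha> + s powr (2*\<beta>) * \<psi> (t/s)"
    unfolding Rf_sym[of \<phi> \<beta> "t"] \<gamma>_def
    using Rf_split[of s t \<phi> lam \<alpha> \<psi> \<beta>] phi[of "t/s"] s0 st by (simp add: h_def)
  define L where "L = (s+1) powr \<gamma> * h powr \<alpha> - s powr \<gamma> * (h+1) powr \<alpha> - (s+1) powr \<gamma> * (h-1) powr \<alpha>
            + s powr \<gamma> * h powr \<alpha>"
  define P where "P = (s+1) powr (2*\<beta>) * \<psi> ((t+1)/(s+1)) - s powr (2*\<beta>) * \<psi> ((t+1)/s)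
          - (s+1) powr (2*\<beta>) * \<psi> (t/(s+1)) + s powr (2*\<beta>) * \<psi> (t/s)"
  have D: "Dd \<phi> \<beta> s t = - lam * L + P" unfolding Dd_def R1 R2 R3 R4 L_def P_def by (simp add: algebra_simps)
  have sg: "0 < s powr \<gamma>" using s0 by simp
  have u: "Dd \<phi> \<beta> s t / (lam * s powr \<gamma>) - 2 * a_alpha \<alpha> (s - t)
      = (- L / s powr \<gamma> - 2 * a_alpha \<alpha> (s - (s + h))) + P / (lam * s powr \<gamma>)"
    unfolding D using lam sg tt by (simp add: field_simps)
  have bL: "\<bar>- L / s powr \<gamma> - 2 * a_alpha \<alpha> (s - (s + h))\<bar> \<le> 2 * (2 + 1/\<eta>) * (s powr (-1) * h powr (\<alpha> - 1))"
    unfolding L_def using L_ge1[of \<eta> s h \<gamma> \<alpha>] e h1 al unfolding \<gamma>_def by auto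
  have bP: "\<bar>P\<bar> \<le> C * (1 + 2/\<eta>)^2 * (1 + 2/\<alpha>) * c1 * (s powr (2*\<beta>-\<alpha>-1) * (h powr (\<alpha>-1) + s powr (\<alpha>-1)))"
    unfolding P_def h_def using P_ge1[OF e st(1) c1s c1g] .
  have i1: "s powr (2*\<beta>-\<alpha>-1) / s powr \<gamma> = s powr (-1)"
    unfolding \<gamma>_def powr_diff[symmetric] by simp
  have i2: "s powr (2*\<beta>-\<alpha>-1) * s powr (\<alpha>-1) / s powr \<gamma> = s powr (\<alpha>-2)"
    unfolding \<gamma>_def powr_add[symmetric] powr_diff[symmetric] by simp
  have bP2: "\<bar>P / (lam * s powr \<gamma>)\<bar> \<le> C * (1 + 2/\<eta>)^2 * (1 + 2/\<alpha>) * c1 / lam * (s powr (-1) * h powr (\<alpha>-1) + s powr (\<alpha>-2))"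
  proof -
    have "\<bar>P / (lam * s powr \<gamma>)\<bar> = \<bar>P\<bar> / (lam * s powr \<gamma>)" using lam sg by (simp add: abs_divide abs_mult)
    also have "\<dots> \<le> C * (1 + 2/\<eta>)^2 * (1 + 2/\<alpha>) * c1 * (s powr (2*\<beta>-\<alpha>-1) * (h powr (\<alpha>-1) + s powr (\<alpha>-1))) / (lam * s powr \<gamma>)"
      using bP lam sg by (intro divide_right_mono) auto
    also have "\<dots> = C * (1 + 2/\<eta>)^2 * (1 + 2/\<alpha>) * c1 / lam * (s powr (2*\<beta>-\<alpha>-1) / s powr \<gamma> * h powr (\<alpha>-1) + s powr (2*\<beta>-\<alpha>-1) * s powr (\<alpha>-1) / s powr \<gamma>)"
      using lam sg by (simp add: field_simps)
    also have "\<dots> = C * (1 + 2/\<eta>)^2 * (1 + 2/\<alpha>) * c1 / lam * (s powr (-1) * h powr (\<alpha>-1) + s powr (\<alpha>-2))"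
      unfolding i1 i2 ..
    finally show ?thesis .
  qed
  have nn: "0 \<le> s powr (-1) * h powr (\<alpha>-1)" "0 \<le> s powr (\<alpha>-2)" by auto
  have "\<bar>Dd \<phi> \<beta> s t / (lam * s powr \<gamma>) - 2 * a_alpha \<alpha> (s - t)\<bar>
      \<le> 2 * (2 + 1/\<eta>) * (s powr (-1) * h powr (\<alpha> - 1)) + C * (1 + 2/\<eta>)^2 * (1 + 2/\<alpha>) * c1 / lam * (s powr (-1) * h powr (\<alpha>-1) + s powr (\<alpha>-2))"
    unfolding u using bL bP2 abs_triangle_ineq by (smt (verit))
  also have "\<dots> \<le> 2 * (2 + 1/\<eta>) * (s powr (-1) * h powr (\<alpha> - 1) + s powr (\<alpha>-2)) + C * (1 + 2/\<eta>)^2 * (1 + 2/\<alpha>) * c1 / lam * (s powr (-1) * h powr (\<alpha>-1) + s powr (\<alpha>-2))"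
    using nn e by (intro add_right_mono mult_left_mono) auto
  also have "\<dots> = (2*(2+1/\<eta>) + C*(1+2/\<eta>)^2*(1+2/\<alpha>)*c1/lam) * (s powr (-1) * h powr (\<alpha>-1) + s powr (\<alpha>-2))"
    by (simp add: algebra_simps)
  finally show ?thesis unfolding \<gamma>_def c1_def h_def .
qed


lemma case_lt1_base:
  fixes \<phi> :: "real \<Rightarrow> real" and lam \<eta> s t :: real
  assumes phi: "\<And>x. 1 \<le> x \<Longrightarrow> \<phi> x = - lam * (x-1) powr \<alpha> + \<psi> x"
    and lam: "0 < lam" and e: "0 < \<eta>" "\<eta> < s" and st: "s < t" "t < s + 1"
  shows "\<bar>Dd \<phi> \<beta> s t / (lam * s powr (2*\<beta>-\<alpha>)) - 2 * a_alpha \<alpha> (s - t)\<bar>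
     \<le> 2 * (2 + 1/\<eta>) / s + \<bar>(s+1) powr (2*\<beta>) * \<psi> ((t+1)/(s+1)) - s powr (2*\<beta>) * \<psi> ((t+1)/s)
          - t powr (2*\<beta>) * \<psi> ((s+1)/t) + s powr (2*\<beta>) * \<psi> (t/s)\<bar> / (lam * s powr (2*\<beta>-\<alpha>))"
proof -
  define \<gamma> where "\<gamma> = 2*\<beta>-\<alpha>"
  define h where "h = t - s"
  have s0: "0 < s" using e by simp
  have h01: "0 \<le> h" "h \<le> 1" using st by (auto simp: h_def)
  have tt: "t = s + h" by (simp add: h_def)
  have R1: "Rf \<phi> \<beta> (t+1) (s+1) = - lam * (s+1) powr \<gamma> * h powr \<alpha> + (s+1) powr (2*\<beta>) * \<psi> ((t+1)/(s+1))"
    unfolding Rf_sym[of \<phi> \<beta> "t+1"] \<gamma>_def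
    using Rf_split[of "s+1" "t+1" \<phi> lam \<alpha> \<psi> \<beta>] phi[of "(t+1)/(s+1)"] s0 st by (simp add: h_def)
  have R2: "Rf \<phi> \<beta> (t+1) s = - lam * s powr \<gamma> * (h+1) powr \<alpha> + s powr (2*\<beta>) * \<psi> ((t+1)/s)"
    unfolding Rf_sym[of \<phi> \<beta> "t+1"] \<gamma>_def
    using Rf_split[of s "t+1" \<phi> lam \<alpha> \<psi> \<beta>] phi[of "(t+1)/s"] s0 st by (simp add: h_def algebra_simps)
  have R3: "Rf \<phi> \<beta> t (s+1) = - lam * (s+h) powr \<gamma> * (1-h) powr \<alpha> + t powr (2*\<beta>) * \<psi> ((s+1)/t)"
    unfolding \<gamma>_def
    using Rf_split[of t "s+1" \<phi> lam \<alpha> \<psi> \<beta>] phi[of "(s+1)/t"] s0 st by (simp add: h_def algebra_simps)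
  have R4: "Rf \<phi> \<beta> t s = - lam * s powr \<gamma> * h powr \<alpha> + s powr (2*\<beta>) * \<psi> (t/s)"
    unfolding Rf_sym[of \<phi> \<beta> "t"] \<gamma>_def
    using Rf_split[of s t \<phi> lam \<alpha> \<psi> \<beta>] phi[of "t/s"] s0 st by (simp add: h_def)
  define L where "L = (s+1) powr \<gamma> * h powr \<alpha> - s powr \<gamma> * (h+1) powr \<alpha> - (s+h) powr \<gamma> * (1-h) powr \<alpha>
            + s powr \<gamma> * h powr \<alpha>"
  define P where "P = (s+1) powr (2*\<beta>) * \<psi> ((t+1)/(s+1)) - s powr (2*\<beta>) * \<psi> ((t+1)/s)
          - t powr (2*\<beta>) * \<psi> ((s+1)/t) + s powr (2*\<beta>) * \<psi> (t/s)"
  have D: "Dd \<phi> \<beta> s t = - lam * L + P" unfolding Dd_def R1 R2 R3 R4 L_def P_def by (simp add: algebra_simps)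
  have sg: "0 < s powr \<gamma>" using s0 by simp
  have u: "Dd \<phi> \<beta> s t / (lam * s powr \<gamma>) - 2 * a_alpha \<alpha> (s - t)
      = (- L / s powr \<gamma> - 2 * a_alpha \<alpha> (s - (s + h))) + P / (lam * s powr \<gamma>)"
    unfolding D using lam sg tt by (simp add: field_simps)
  have bL: "\<bar>- L / s powr \<gamma> - 2 * a_alpha \<alpha> (s - (s + h))\<bar> \<le> 2 * (2 + 1/\<eta>) / s"
    unfolding L_def using L_lt1[of \<eta> s h \<gamma> \<alpha>] e h01 al unfolding \<gamma>_def by auto
  have bP: "\<bar>P / (lam * s powr \<gamma>)\<bar> = \<bar>P\<bar> / (lam * s powr \<gamma>)" using lam sg by (simp add: abs_divide abs_mult)
  show ?thesis unfolding \<gamma>_def[symmetric] P_def[symmetric] u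
    by (rule order_trans[OF abs_triangle_ineq add_mono[OF bL bP[THEN eq_refl]]])
qed


lemma case_lt1_a:
  fixes \<phi> :: "real \<Rightarrow> real" and lam \<eta> s t :: real
  assumes a1: "\<alpha> < 1" and phi: "\<And>x. 1 \<le> x \<Longrightarrow> \<phi> x = - lam * (x-1) powr \<alpha> + \<psi> x"
    and lam: "0 < lam" and e: "0 < \<eta>" "\<eta> < s" and st: "s < t" "t < s + 1"
  shows "\<bar>Dd \<phi> \<beta> s t / (lam * s powr (2*\<beta>-\<alpha>)) - 2 * a_alpha \<alpha> (s - t)\<bar>
     \<le> (2 * (2 + 1/\<eta>) / \<eta> powr \<alpha> + (4 * (1+2/\<eta>)^2 * \<bar>\<psi> 1\<bar> + 8 * C * (1+2/\<eta>)^2) / lam) * s powr (\<alpha>-1)"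
proof -
  define K where "K = 4 * (1+2/\<eta>)^2 * \<bar>\<psi> 1\<bar> + 8 * C * (1+2/\<eta>)^2"
  have s0: "0 < s" using e by simp
  have sg: "0 < s powr (2*\<beta>-\<alpha>)" using s0 by simp
  have K0: "0 \<le> K" unfolding K_def using C by simp
  note B = case_lt1_base[OF phi lam e st]
  note P = P_lt1_a[OF a1 e st, folded K_def]
  have i1: "s powr (2*\<beta>-1) / s powr (2*\<beta>-\<alpha>) = s powr (\<alpha>-1)"
    unfolding powr_diff[symmetric] by simp
  have p2: "\<bar>(s+1) powr (2*\<beta>) * \<psi> ((t+1)/(s+1)) - s powr (2*\<beta>) * \<psi> ((t+1)/s)
          - t powr (2*\<beta>) * \<psi> ((s+1)/t) + s powr (2*\<beta>) * \<psi> (t/s)\<bar> / (lam * s powr (2*\<beta>-\<alpha>))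
        \<le> K * s powr (2*\<beta>-1) / (lam * s powr (2*\<beta>-\<alpha>))"
    using P lam sg by (intro divide_right_mono) auto
  also have "\<dots> = K / lam * s powr (\<alpha>-1)" using i1 lam sg by (simp add: field_simps)
  finally have p3: "\<bar>(s+1) powr (2*\<beta>) * \<psi> ((t+1)/(s+1)) - s powr (2*\<beta>) * \<psi> ((t+1)/s)
          - t powr (2*\<beta>) * \<psi> ((s+1)/t) + s powr (2*\<beta>) * \<psi> (t/s)\<bar> / (lam * s powr (2*\<beta>-\<alpha>))
        \<le> K / lam * s powr (\<alpha>-1)" .
  have q: "1 / s \<le> s powr (\<alpha>-1) / \<eta> powr \<alpha>"
  proof -
    have "\<eta> powr \<alpha> \<le> s powr \<alpha>" using e al by (intro powr_mono2) auto
    then have "\<eta> powr \<alpha> / s \<le> s powr \<alpha> / s" using s0 by (intro divide_right_mono) auto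
    also have "s powr \<alpha> / s = s powr (\<alpha>-1)" using s0 by (simp add: powr_diff)
    finally have "\<eta> powr \<alpha> / s \<le> s powr (\<alpha>-1)" .
    then show ?thesis using e by (simp add: field_simps)
  qed
  have q2: "2 * (2 + 1/\<eta>) / s \<le> 2 * (2 + 1/\<eta>) / \<eta> powr \<alpha> * s powr (\<alpha>-1)"
    using mult_left_mono[OF q, of "2 * (2 + 1/\<eta>)"] e by simp
  show ?thesis using B p3 q2 unfolding K_def[symmetric] by (simp add: algebra_simps)
qed

lemma case_lt1_b:
  fixes \<phi> :: "real \<Rightarrow> real" and lam \<eta> s t :: real
  assumes a1: "1 \<le> \<alpha>" and phi: "\<And>x. 1 \<le> x \<Longrightarrow> \<phi> x = - lam * (x-1) powr \<alpha> + \<psi> x"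
    and lam: "0 < lam" and e: "0 < \<eta>" "\<eta> < s" and st: "s < t" "t < s + 1"
  shows "\<bar>Dd \<phi> \<beta> s t / (lam * s powr (2*\<beta>-\<alpha>)) - 2 * a_alpha \<alpha> (s - t)\<bar>
     \<le> (2 * (2 + 1/\<eta>) * \<eta> powr (1-\<alpha>) + (6 * (1+2/\<eta>)^2 * \<bar>\<psi> 1\<bar> + 16 * C * (1+2/\<eta>)^2) / lam) * s powr (\<alpha>-2)"
proof -
  define K where "K = 6 * (1+2/\<eta>)^2 * \<bar>\<psi> 1\<bar> + 16 * C * (1+2/\<eta>)^2"
  have s0: "0 < s" using e by simp
  have sg: "0 < s powr (2*\<beta>-\<alpha>)" using s0 by simp
  note B = case_lt1_base[OF phi lam e st]
  note P = P_lt1_b[OF a1 e st, folded K_def]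
  have i1: "s powr (2*\<beta>-2) / s powr (2*\<beta>-\<alpha>) = s powr (\<alpha>-2)"
    unfolding powr_diff[symmetric] by simp
  have p2: "\<bar>(s+1) powr (2*\<beta>) * \<psi> ((t+1)/(s+1)) - s powr (2*\<beta>) * \<psi> ((t+1)/s)
          - t powr (2*\<beta>) * \<psi> ((s+1)/t) + s powr (2*\<beta>) * \<psi> (t/s)\<bar> / (lam * s powr (2*\<beta>-\<alpha>))
        \<le> K * s powr (2*\<beta>-2) / (lam * s powr (2*\<beta>-\<alpha>))"
    using P lam sg by (intro divide_right_mono) auto
  also have "\<dots> = K / lam * s powr (\<alpha>-2)" using i1 lam sg by (simp add: field_simps)
  finally have p3: "\<bar>(s+1) powr (2*\<beta>) * \<psi> ((t+1)/(s+1)) - s powr (2*\<beta>) * \<psi> ((t+1)/s)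
          - t powr (2*\<beta>) * \<psi> ((s+1)/t) + s powr (2*\<beta>) * \<psi> (t/s)\<bar> / (lam * s powr (2*\<beta>-\<alpha>))
        \<le> K / lam * s powr (\<alpha>-2)" .
  have q: "1 / s \<le> \<eta> powr (1-\<alpha>) * s powr (\<alpha>-2)"
  proof -
    have "s powr (1-\<alpha>) \<le> \<eta> powr (1-\<alpha>)" using e a1 by (intro powr_mono2') auto
    then have "s powr (1-\<alpha>) * s powr (\<alpha>-2) \<le> \<eta> powr (1-\<alpha>) * s powr (\<alpha>-2)"
      by (intro mult_right_mono) auto
    moreover have "s powr (1-\<alpha>) * s powr (\<alpha>-2) = 1 / s"
      using s0 powr_add[of s "1-\<alpha>" "\<alpha>-2"] by (simp add: powr_minus_divide)
    ultimately show ?thesis by simp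
  qed
  have q2: "2 * (2 + 1/\<eta>) / s \<le> 2 * (2 + 1/\<eta>) * \<eta> powr (1-\<alpha>) * s powr (\<alpha>-2)"
    using mult_left_mono[OF q, of "2 * (2 + 1/\<eta>)"] e by (simp add: mult.assoc)
  show ?thesis using B p3 q2 unfolding K_def[symmetric] by (simp add: algebra_simps)
qed

end


lemma gauss_sq_int:
  assumes P: "prob_space M" and g: "gaussian_rv M Y" and m: "Y \<in> borel_measurable M"
  shows "integrable M (\<lambda>\<omega>. (Y \<omega>)^2)"
proof -
  interpret prob_space M by fact
  from g consider (n) \<mu> \<sigma> where "\<sigma> > 0" "distributed M lborel Y (normal_density \<mu> \<sigma>)"
    | (c) c where "AE \<omega> in M. Y \<omega> = c" unfolding gaussian_rv_def by blast
  then show ?thesis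
  proof cases
    case n
    have i: "integrable lborel (\<lambda>x. normal_density \<mu> \<sigma> x * x^2)"
    proof -
      have e: "(\<lambda>x. normal_density \<mu> \<sigma> x * x^2) = (\<lambda>x. normal_density \<mu> \<sigma> x * (x-\<mu>)^2 + 2*\<mu>*(normal_density \<mu> \<sigma> x * (x-\<mu>)^1) + \<mu>^2 * normal_density \<mu> \<sigma> x)"
        by (rule ext) (simp add: power2_eq_square algebra_simps)
      show ?thesis unfolding e
        using n(1) by (intro Bochner_Integration.integrable_add Bochner_Integration.integrable_mult_right integrable_normal_moment integrable_normal_density) auto
    qed
    show ?thesis
      using distributed_integrable[OF n(2), of "\<lambda>x. x^2"] i by simp
  next
    case c
    have i1: "integrable M (\<lambda>\<omega>. c^2)" by simp
    have i2: "AE \<omega> in M. c^2 = (Y \<omega>)^2" using c by auto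
    have i3: "(\<lambda>\<omega>. (Y \<omega>)^2) \<in> borel_measurable M" using m by measurable
    show ?thesis by (rule integrable_cong_AE_imp[OF i1 i3 i2])
  qed
qed


lemma cov_ss:
  assumes ss: "self_similar M X \<beta>" and meas: "\<And>t. t \<ge> 0 \<Longrightarrow> X t \<in> borel_measurable M"
    and a: "0 < a" "a \<le> b"
  shows "integral\<^sup>L M (\<lambda>\<omega>. X a \<omega> * X b \<omega>) = a powr (2*\<beta>) * cov_phi M X (b/a)"
proof -
  define I where "I = {1, b/a}"
  have fin: "finite I" and I0: "I \<subseteq> {0..}" using a by (auto simp: I_def)
  have eq: "distr M (Pi\<^sub>M I (\<lambda>_. borel)) (\<lambda>\<omega>. \<lambda>t\<in>I. X (a * t) \<omega>) =
        distr M (Pi\<^sub>M I (\<lambda>_. borel)) (\<lambda>\<omega>. \<lambda>t\<in>I. a powr \<beta> * X t \<omega>)"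
    using ss[unfolded self_similar_def, rule_format, OF a(1) fin I0] .
  define g where "g = (\<lambda>f::real\<Rightarrow>real. f 1 * f (b/a))"
  have gm: "g \<in> borel_measurable (Pi\<^sub>M I (\<lambda>_. borel))"
  proof -
    have "1 \<in> I" "b/a \<in> I" by (auto simp: I_def)
    then have "(\<lambda>f. f 1) \<in> borel_measurable (Pi\<^sub>M I (\<lambda>_. borel))" "(\<lambda>f. f (b/a)) \<in> borel_measurable (Pi\<^sub>M I (\<lambda>_. borel))"
      by (auto intro!: measurable_component_singleton)
    then show ?thesis unfolding g_def by (rule borel_measurable_times)
  qed
  have T1: "(\<lambda>\<omega>. \<lambda>t\<in>I. X (a * t) \<omega>) \<in> M \<rightarrow>\<^sub>M Pi\<^sub>M I (\<lambda>_. borel)"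
  proof (rule measurable_restrict)
    fix i assume "i \<in> I"
    then have "a * i \<ge> 0" using I0 a by auto
    then show "X (a * i) \<in> borel_measurable M" by (rule meas)
  qed
  have T2: "(\<lambda>\<omega>. \<lambda>t\<in>I. a powr \<beta> * X t \<omega>) \<in> M \<rightarrow>\<^sub>M Pi\<^sub>M I (\<lambda>_. borel)"
  proof (rule measurable_restrict)
    fix i assume "i \<in> I"
    then have "i \<ge> 0" using I0 a by auto
    then have "X i \<in> borel_measurable M" by (rule meas)
    then show "(\<lambda>\<omega>. a powr \<beta> * X i \<omega>) \<in> borel_measurable M" by measurable
  qed
  have "integral\<^sup>L M (\<lambda>\<omega>. X a \<omega> * X b \<omega>) = integral\<^sup>L M (\<lambda>\<omega>. g (\<lambda>t\<in>I. X (a * t) \<omega>))"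
    using a by (simp add: g_def I_def)
  also have "\<dots> = integral\<^sup>L (distr M (Pi\<^sub>M I (\<lambda>_. borel)) (\<lambda>\<omega>. \<lambda>t\<in>I. X (a * t) \<omega>)) g"
    by (rule integral_distr[symmetric, OF T1 gm])
  also have "\<dots> = integral\<^sup>L (distr M (Pi\<^sub>M I (\<lambda>_. borel)) (\<lambda>\<omega>. \<lambda>t\<in>I. a powr \<beta> * X t \<omega>)) g"
    by (simp only: eq)
  also have "\<dots> = integral\<^sup>L M (\<lambda>\<omega>. g (\<lambda>t\<in>I. a powr \<beta> * X t \<omega>))"
    by (rule integral_distr[OF T2 gm])
  also have "\<dots> = integral\<^sup>L M (\<lambda>\<omega>. a powr (2*\<beta>) * (X 1 \<omega> * X (b/a) \<omega>))"
  proof (rule Bochner_Integration.integral_cong[OF refl])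
    fix \<omega>
    have "a powr (2*\<beta>) = a powr \<beta> * a powr \<beta>" unfolding mult_2 by (rule powr_add)
    moreover have "1 \<in> I" "b/a \<in> I" by (auto simp: I_def)
    ultimately show "g (\<lambda>t\<in>I. a powr \<beta> * X t \<omega>) = a powr (2*\<beta>) * (X 1 \<omega> * X (b/a) \<omega>)"
      unfolding g_def by (simp only: restrict_apply' mult_ac)
  qed
  also have "\<dots> = a powr (2*\<beta>) * cov_phi M X (b/a)"
    by (simp add: cov_phi_def)
  finally show ?thesis .
qed


lemma gp_rv: assumes "gaussian_process M X" "u \<ge> 0"
  shows "gaussian_rv M (X u)" "X u \<in> borel_measurable M"
proof -
  have "\<forall>I c. finite I \<longrightarrow> I \<subseteq> {0..} \<longrightarrow> gaussian_rv M (\<lambda>\<omega>. \<Sum>t\<in>I. c t * X t \<omega>)"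
    using assms(1) unfolding gaussian_process_def by (rule conjunct2)
  then have "gaussian_rv M (\<lambda>\<omega>. \<Sum>t\<in>{u}. (\<lambda>_. 1) t * X t \<omega>)"
    using assms(2) by (elim allE[of _ "{u}"] allE[of _ "\<lambda>_. 1"]) auto
  then show "gaussian_rv M (X u)" by simp
  show "X u \<in> borel_measurable M" using assms unfolding gaussian_process_def by simp
qed
lemma prod_int:
  assumes "integrable M (\<lambda>\<omega>. (f \<omega>)^2)" "integrable M (\<lambda>\<omega>. (g \<omega>)^2)"
    "f \<in> borel_measurable M" "g \<in> borel_measurable M"
  shows "integrable M (\<lambda>\<omega>. f \<omega> * g \<omega> :: real)"
proof (rule Bochner_Integration.integrable_bound)
  show "integrable M (\<lambda>\<omega>. (f \<omega>)^2 + (g \<omega>)^2)" using assms by auto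
  show "(\<lambda>\<omega>. f \<omega> * g \<omega>) \<in> borel_measurable M" using assms by measurable
  show "AE \<omega> in M. norm (f \<omega> * g \<omega>) \<le> norm ((f \<omega>)^2 + (g \<omega>)^2)"
  proof (rule AE_I2)
    fix \<omega>
    have h: "0 \<le> (\<bar>f \<omega>\<bar> - \<bar>g \<omega>\<bar>)^2" by simp
    have "2 * \<bar>f \<omega>\<bar> * \<bar>g \<omega>\<bar> \<le> (f \<omega>)^2 + (g \<omega>)^2"
      using h by (simp add: power2_eq_square algebra_simps abs_mult_self_eq)
    moreover have "0 \<le> \<bar>f \<omega>\<bar> * \<bar>g \<omega>\<bar>" by simp
    ultimately have "\<bar>f \<omega>\<bar> * \<bar>g \<omega>\<bar> \<le> (f \<omega>)^2 + (g \<omega>)^2" by linarith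
    then show "norm (f \<omega> * g \<omega>) \<le> norm ((f \<omega>)^2 + (g \<omega>)^2)"
      by (simp add: abs_mult)
  qed
qed

lemma incr_expand:
  assumes P: "prob_space M" and gp: "gaussian_process M X" and s: "s \<ge> 0" and t: "t \<ge> 0"
  shows "integral\<^sup>L M (\<lambda>\<omega>. (X (t + 1) \<omega> - X t \<omega>) * (X (s + 1) \<omega> - X s \<omega>)) =
    integral\<^sup>L M (\<lambda>\<omega>. X (t+1) \<omega> * X (s+1) \<omega>) - integral\<^sup>L M (\<lambda>\<omega>. X (t+1) \<omega> * X s \<omega>)
    - integral\<^sup>L M (\<lambda>\<omega>. X t \<omega> * X (s+1) \<omega>) + integral\<^sup>L M (\<lambda>\<omega>. X t \<omega> * X s \<omega>)"
proof -
  have sq: "integrable M (\<lambda>\<omega>. (X u \<omega>)^2)" and m: "X u \<in> borel_measurable M" if "u \<ge> 0" for u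
    using gauss_sq_int[OF P gp_rv[OF gp that]] gp_rv[OF gp that] by auto
  have pi: "integrable M (\<lambda>\<omega>. X u \<omega> * X v \<omega>)" if "u \<ge> 0" "v \<ge> 0" for u v
    by (rule prod_int[OF sq sq m m]) (use that in auto)
  have e: "(\<lambda>\<omega>. (X (t + 1) \<omega> - X t \<omega>) * (X (s + 1) \<omega> - X s \<omega>)) =
     (\<lambda>\<omega>. (X (t+1) \<omega> * X (s+1) \<omega> - X (t+1) \<omega> * X s \<omega>) - (X t \<omega> * X (s+1) \<omega>) + X t \<omega> * X s \<omega>)"
    by (rule ext) (simp add: algebra_simps)
  have i1: "integrable M (\<lambda>\<omega>. X (t+1) \<omega> * X (s+1) \<omega>)" using s t by (intro pi) auto
  have i2: "integrable M (\<lambda>\<omega>. X (t+1) \<omega> * X s \<omega>)" using s t by (intro pi) auto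
  have i3: "integrable M (\<lambda>\<omega>. X t \<omega> * X (s+1) \<omega>)" using s t by (intro pi) auto
  have i4: "integrable M (\<lambda>\<omega>. X t \<omega> * X s \<omega>)" using s t by (intro pi) auto
  have i12: "integrable M (\<lambda>\<omega>. X (t+1) \<omega> * X (s+1) \<omega> - X (t+1) \<omega> * X s \<omega>)"
    by (rule Bochner_Integration.integrable_diff[OF i1 i2])
  have i123: "integrable M (\<lambda>\<omega>. (X (t+1) \<omega> * X (s+1) \<omega> - X (t+1) \<omega> * X s \<omega>) - X t \<omega> * X (s+1) \<omega>)"
    by (rule Bochner_Integration.integrable_diff[OF i12 i3])
  show ?thesis unfolding e
    unfolding Bochner_Integration.integral_add[OF i123 i4] Bochner_Integration.integral_diff[OF i12 i3]
      Bochner_Integration.integral_diff[OF i1 i2] ..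
qed


lemma cont_Rf:
  fixes \<phi> :: "real \<Rightarrow> real" and f g :: "'b::topological_space \<Rightarrow> real"
  assumes c: "continuous_on {1..} \<phi>" and f: "continuous_on S f" and g: "continuous_on S g"
    and pos: "\<And>p. p \<in> S \<Longrightarrow> 0 < f p \<and> 0 < g p"
  shows "continuous_on S (\<lambda>p. Rf \<phi> \<beta> (f p) (g p))"
proof -
  have cm: "continuous_on S (\<lambda>p. min (f p) (g p))" using f g by (intro continuous_intros)
  have cM: "continuous_on S (\<lambda>p. max (f p) (g p))" using f g by (intro continuous_intros)
  have c1: "continuous_on S (\<lambda>p. min (f p) (g p) powr (2*\<beta>))"
    by (rule continuous_on_powr'[OF cm continuous_on_const]) (use pos in \<open>fastforce\<close>)
  have cq: "continuous_on S (\<lambda>p. max (f p) (g p) / min (f p) (g p))"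
  proof (rule continuous_on_divide[OF cM cm])
    show "\<forall>p\<in>S. min (f p) (g p) \<noteq> 0"
    proof
      fix p assume "p \<in> S"
      then show "min (f p) (g p) \<noteq> 0" using pos[of p] by (simp add: min_def)
    qed
  qed
  have im: "(\<lambda>p. max (f p) (g p) / min (f p) (g p)) ` S \<subseteq> {1..}"
    using pos by (auto simp: field_simps)
  have c2: "continuous_on S (\<lambda>p. \<phi> (max (f p) (g p) / min (f p) (g p)))"
    by (rule continuous_on_compose2[OF c cq im])
  show ?thesis unfolding Rf_def by (rule continuous_on_mult[OF c1 c2])
qed

lemma cont_a_alpha:
  fixes h :: "'b::topological_space \<Rightarrow> real"
  assumes "0 < \<alpha>" "continuous_on S h"
  shows "continuous_on S (\<lambda>p. a_alpha \<alpha> (h p))"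
  unfolding a_alpha_def using assms
  by (intro continuous_intros continuous_on_powr') auto

lemma EXX:
  assumes ss: "self_similar M X \<beta>" and meas: "\<And>t. t \<ge> 0 \<Longrightarrow> X t \<in> borel_measurable M"
    and a: "0 < a" "0 < b"
  shows "integral\<^sup>L M (\<lambda>\<omega>. X a \<omega> * X b \<omega>) = Rf (cov_phi M X) \<beta> a b"
proof (cases "a \<le> b")
  case True
  then show ?thesis using cov_ss[OF ss meas a(1) True] by (simp add: Rf_def min_def max_def)
next
  case False
  then have "b \<le> a" by simp
  then have "integral\<^sup>L M (\<lambda>\<omega>. X b \<omega> * X a \<omega>) = Rf (cov_phi M X) \<beta> b a"
    using cov_ss[OF ss meas a(2)] False by (simp add: Rf_def min_def max_def)
  then show ?thesis by (simp add: mult.commute Rf_sym)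
qed

theorem lemma4p2:
  fixes M :: "'a measure" and X :: "real \<Rightarrow> 'a \<Rightarrow> real"
    and \<beta> \<alpha> lam \<eta> M1 M2 :: real and \<psi> :: "real \<Rightarrow> real"
  assumes "prob_space M"
    and "gaussian_process M X" and "centered M X"
    and "0 < \<beta>" and "\<beta> < 1" and "self_similar M X \<beta>"
    and "H1 M X \<beta> \<alpha> lam \<psi>"
    and "\<eta> > 0" and "M1 > 0" and "M2 > 0"
  shows "\<exists>u2 :: real \<Rightarrow> real \<Rightarrow> real. \<exists>C > 0.
    continuous_on ({0<..} \<times> {0<..}) (\<lambda>(s, t). u2 s t) \<and>
    (\<forall>s t. s > \<eta> \<longrightarrow> t > \<eta> \<longrightarrow> \<eta> \<le> \<bar>s - t\<bar> \<longrightarrow> \<bar>s - t\<bar> \<le> M1 * min s t + M2 \<longrightarrow>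
      integral\<^sup>L M (\<lambda>\<omega>. (X (t + 1) \<omega> - X t \<omega>) * (X (s + 1) \<omega> - X s \<omega>))
        = lam * (min s t) powr (2 * \<beta> - \<alpha>) * (2 * a_alpha \<alpha> (s - t) + u2 s t) \<and>
      (\<bar>s - t\<bar> \<ge> 1 \<longrightarrow>
         \<bar>u2 s t\<bar> \<le> C * ((min s t) powr (-1) * \<bar>s - t\<bar> powr (\<alpha> - 1) + (min s t) powr (\<alpha> - 2))) \<and>
      (\<bar>s - t\<bar> < 1 \<longrightarrow>
         \<bar>u2 s t\<bar> \<le> C * ((if \<alpha> < 1 then (min s t) powr (\<alpha> - 1) else 0)
                          + (if \<alpha> \<ge> 1 then (min s t) powr (\<alpha> - 2) else 0))))"
proof -
  interpret P: prob_space M by fact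
  have meas: "\<And>t. t \<ge> 0 \<Longrightarrow> X t \<in> borel_measurable M"
    using assms(2) unfolding gaussian_process_def by simp
  note h1 = assms(7)[unfolded H1_def]
  have al: "0 < \<alpha>" "\<alpha> \<le> 2 * \<beta>" "0 < lam" using h1 by auto
  have phi0: "\<And>x. 1 \<le> x \<Longrightarrow> cov_phi M X x = - lam * (x - 1) powr \<alpha> + \<psi> x" using h1 by auto
  obtain U where U: "open U" "{1..} \<subseteq> U" "\<And>x. x \<in> U \<Longrightarrow> \<psi> differentiable (at x) \<and> deriv \<psi> differentiable (at x)"
    using h1 by auto
  obtain C0 where C0: "0 \<le> C0" "\<And>x. 1 < x \<Longrightarrow> \<bar>deriv \<psi> x\<bar> \<le> C0 * x powr (\<alpha> - 1)"
     "\<And>x. 1 < x \<Longrightarrow> \<bar>deriv (deriv \<psi>) x\<bar> \<le> C0 * x powr (-1) * (x - 1) powr (\<alpha> - 1)"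
    using h1 by auto
  have bc: "1 \<le> \<alpha> \<Longrightarrow> deriv \<psi> 1 = \<beta> * \<psi> 1" using h1 by auto
  have dif: "\<psi> differentiable (at x)" "deriv \<psi> differentiable (at x)" if "1 \<le> x" for x
    using U(2) U(3)[of x] that by auto
  have d1: "(\<psi> has_real_derivative deriv \<psi> x) (at x)" if "1 \<le> x" for x
    using dif(1)[OF that] DERIV_deriv_iff_real_differentiable by blast
  have d2: "(deriv \<psi> has_real_derivative deriv (deriv \<psi>) x) (at x)" if "1 \<le> x" for x
    using dif(2)[OF that] DERIV_deriv_iff_real_differentiable by blast
  interpret Q: psi_ctx \<psi> "deriv \<psi>" "deriv (deriv \<psi>)" \<alpha> \<beta> C0
    by (unfold_locales) (use al assms(4,5) C0 d1 d2 bc in auto)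
  define \<phi> where "\<phi> = cov_phi M X"
  have phi: "\<And>x. 1 \<le> x \<Longrightarrow> \<phi> x = - lam * (x - 1) powr \<alpha> + \<psi> x" unfolding \<phi>_def by (rule phi0)
  have cpsi: "continuous_on {1..} \<psi>"
    by (rule continuous_at_imp_continuous_on) (auto intro!: differentiable_imp_continuous_within dif)
  have cphi: "continuous_on {1..} \<phi>"
  proof -
    have "continuous_on {1..} (\<lambda>x. - lam * (x - 1) powr \<alpha> + \<psi> x)"
      by (intro continuous_intros continuous_on_powr' cpsi) (use al in auto)
    moreover have "continuous_on {1..} \<phi> = continuous_on {1..} (\<lambda>x. - lam * (x - 1) powr \<alpha> + \<psi> x)"
      by (rule continuous_on_cong) (auto simp: phi)
    ultimately show ?thesis by simp
  qed
  define u2 where "u2 = (\<lambda>s t. Dd \<phi> \<beta> s t / (lam * (min s t) powr (2*\<beta>-\<alpha>)) - 2 * a_alpha \<alpha> (s - t))"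
  define c0 where "c0 = (1+2/\<eta>)^2"
  define K1 where "K1 = 2*(2+1/\<eta>) + C0*(1+2/\<eta>)^2*(1+2/\<alpha>)*(1+M1+(M2+1)/\<eta>)/lam"
  define K2 where "K2 = 2 * (2 + 1/\<eta>) / \<eta> powr \<alpha> + (4 * (1+2/\<eta>)^2 * \<bar>\<psi> 1\<bar> + 8 * C0 * (1+2/\<eta>)^2) / lam"
  define K3 where "K3 = 2 * (2 + 1/\<eta>) * \<eta> powr (1-\<alpha>) + (6 * (1+2/\<eta>)^2 * \<bar>\<psi> 1\<bar> + 16 * C0 * (1+2/\<eta>)^2) / lam"
  define CC where "CC = K1 + K2 + K3 + 1"
  have K1: "0 \<le> K1" unfolding K1_def using al C0 assms(8,9,10) by simp
  have K2: "0 \<le> K2" unfolding K2_def using al C0 assms(8) by simp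
  have K3: "0 \<le> K3" unfolding K3_def using al C0 assms(8) by simp
  have K1C: "K1 \<le> CC" and K2C: "K2 \<le> CC" and K3C: "K3 \<le> CC" using K1 K2 K3 unfolding CC_def by auto
  have CC0: "CC > 0" using K1 K2 K3 unfolding CC_def by auto
  have aa_sym: "a_alpha \<alpha> (s - t) = a_alpha \<alpha> (t - s)" for s t
  proof -
    have "\<bar>s - t - 1\<bar> = \<bar>t - s + 1\<bar>" "\<bar>s - t + 1\<bar> = \<bar>t - s - 1\<bar>" "\<bar>s - t\<bar> = \<bar>t - s\<bar>" by auto
    then show ?thesis unfolding a_alpha_def by simp
  qed
  have u2_sym: "u2 s t = u2 t s" for s t unfolding u2_def using Dd_sym[of \<phi> \<beta> s t] aa_sym[of s t]
    by (simp add: min.commute)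
  have main: "(t - s \<ge> 1 \<longrightarrow> \<bar>u2 s t\<bar> \<le> CC * (s powr (-1) * (t - s) powr (\<alpha> - 1) + s powr (\<alpha> - 2))) \<and>
      (t - s < 1 \<longrightarrow> \<bar>u2 s t\<bar> \<le> CC * ((if \<alpha> < 1 then s powr (\<alpha> - 1) else 0) + (if \<alpha> \<ge> 1 then s powr (\<alpha> - 2) else 0)))"
    if st: "\<eta> < s" "s + \<eta> \<le> t" "t - s \<le> M1 * s + M2" for s t
  proof -
    have ms: "min s t = s" using st assms(8) by simp
    have u: "u2 s t = Dd \<phi> \<beta> s t / (lam * s powr (2*\<beta>-\<alpha>)) - 2 * a_alpha \<alpha> (s - t)"
      unfolding u2_def ms ..
    show ?thesis
    proof (intro conjI impI)
      assume h: "1 \<le> t - s"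
      have "\<bar>u2 s t\<bar> \<le> K1 * (s powr (-1) * (t - s) powr (\<alpha> - 1) + s powr (\<alpha> - 2))"
        unfolding u K1_def using Q.case_ge1[OF phi al(3) assms(8) st(1) _ _ _ st(3)] h assms(9,10) by simp
      also have "\<dots> \<le> CC * (s powr (-1) * (t - s) powr (\<alpha> - 1) + s powr (\<alpha> - 2))"
        using K1C by (intro mult_right_mono) auto
      finally show "\<bar>u2 s t\<bar> \<le> CC * (s powr (-1) * (t - s) powr (\<alpha> - 1) + s powr (\<alpha> - 2))" .
    next
      assume h: "t - s < 1"
      have st2: "s < t" "t < s + 1" using h st assms(8) by auto
      show "\<bar>u2 s t\<bar> \<le> CC * ((if \<alpha> < 1 then s powr (\<alpha> - 1) else 0) + (if \<alpha> \<ge> 1 then s powr (\<alpha> - 2) else 0))"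
      proof (cases "\<alpha> < 1")
        case True
        have "\<bar>u2 s t\<bar> \<le> K2 * s powr (\<alpha> - 1)"
          unfolding u K2_def using Q.case_lt1_a[OF True phi al(3) assms(8) st(1) st2] by simp
        also have "\<dots> \<le> CC * s powr (\<alpha> - 1)" using K2C by (intro mult_right_mono) auto
        finally show ?thesis using True by simp
      next
        case False
        then have a1: "1 \<le> \<alpha>" by simp
        have "\<bar>u2 s t\<bar> \<le> K3 * s powr (\<alpha> - 2)"
          unfolding u K3_def using Q.case_lt1_b[OF a1 phi al(3) assms(8) st(1) st2] by simp
        also have "\<dots> \<le> CC * s powr (\<alpha> - 2)" using K3C by (intro mult_right_mono) auto
        finally show ?thesis using False by simp
      qed
    qed
  qed
  have integ: "integral\<^sup>L M (\<lambda>\<omega>. (X (t + 1) \<omega> - X t \<omega>) * (X (s + 1) \<omega> - X s \<omega>)) = Dd \<phi> \<beta> s t"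
    if "0 < s" "0 < t" for s t
  proof -
    have s0: "0 \<le> s" "0 \<le> t" using that by auto
    show ?thesis unfolding incr_expand[OF assms(1,2) s0] using that
      by (simp add: EXX[OF assms(6) meas] Dd_def \<phi>_def)
  qed
  have eqn: "integral\<^sup>L M (\<lambda>\<omega>. (X (t + 1) \<omega> - X t \<omega>) * (X (s + 1) \<omega> - X s \<omega>))
        = lam * (min s t) powr (2 * \<beta> - \<alpha>) * (2 * a_alpha \<alpha> (s - t) + u2 s t)"
    if "0 < s" "0 < t" for s t
  proof -
    have "0 < lam * (min s t) powr (2 * \<beta> - \<alpha>)" using that al by simp
    moreover have "min s t \<noteq> 0" "lam \<noteq> 0" using that al by auto
    ultimately show ?thesis unfolding integ[OF that] u2_def by (simp add: field_simps)
  qed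
  have cont: "continuous_on ({0<..} \<times> {0<..}) (\<lambda>(s, t). u2 s t)"
  proof -
    let ?S = "{0<..} \<times> {0<..} :: (real \<times> real) set"
    have pos: "\<And>p. p \<in> ?S \<Longrightarrow> 0 < fst p \<and> 0 < snd p" by auto
    have cf: "continuous_on ?S (\<lambda>p. fst p + c)" "continuous_on ?S (\<lambda>p. snd p + c)" for c :: real
      by (intro continuous_intros)+
    have cD: "continuous_on ?S (\<lambda>p. Dd \<phi> \<beta> (fst p) (snd p))"
      unfolding Dd_def
      by (intro continuous_on_add continuous_on_diff cont_Rf[OF cphi] continuous_intros)
         (use pos in \<open>auto simp: add_pos_pos\<close>)
    have cm: "continuous_on ?S (\<lambda>p. lam * (min (fst p) (snd p)) powr (2*\<beta>-\<alpha>))"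
      by (intro continuous_on_mult continuous_on_const continuous_on_powr' continuous_intros)
         (use pos in \<open>fastforce\<close>)
    have ca: "continuous_on ?S (\<lambda>p. 2 * a_alpha \<alpha> (fst p - snd p))"
      by (intro continuous_on_mult continuous_on_const cont_a_alpha al(1) continuous_intros)
    have "continuous_on ?S (\<lambda>p. u2 (fst p) (snd p))"
      unfolding u2_def
    proof (intro continuous_on_diff continuous_on_divide cD cm ca ballI)
      fix p assume "p \<in> ?S"
      then show "lam * (min (fst p) (snd p)) powr (2*\<beta>-\<alpha>) \<noteq> 0" using al pos[of p] by (simp add: min_def)
    qed
    then show ?thesis by (simp add: case_prod_beta)
  qed
  show ?thesis
  proof (intro exI[of _ u2] exI[of _ CC] conjI CC0 cont allI impI)
    fix s t assume s: "\<eta> < s" and t: "\<eta> < t" and d1: "\<eta> \<le> \<bar>s - t\<bar>" and d2: "\<bar>s - t\<bar> \<le> M1 * min s t + M2"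
    have s0: "0 < s" "0 < t" using s t assms(8) by auto
    show "integral\<^sup>L M (\<lambda>\<omega>. (X (t + 1) \<omega> - X t \<omega>) * (X (s + 1) \<omega> - X s \<omega>))
        = lam * (min s t) powr (2 * \<beta> - \<alpha>) * (2 * a_alpha \<alpha> (s - t) + u2 s t)"
      by (rule eqn[OF s0])
    have B: "(\<bar>s - t\<bar> \<ge> 1 \<longrightarrow>
         \<bar>u2 s t\<bar> \<le> CC * ((min s t) powr (-1) * \<bar>s - t\<bar> powr (\<alpha> - 1) + (min s t) powr (\<alpha> - 2))) \<and>
      (\<bar>s - t\<bar> < 1 \<longrightarrow>
         \<bar>u2 s t\<bar> \<le> CC * ((if \<alpha> < 1 then (min s t) powr (\<alpha> - 1) else 0)
                          + (if \<alpha> \<ge> 1 then (min s t) powr (\<alpha> - 2) else 0)))"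
    proof (cases "s < t")
      case True
      have e: "min s t = s" "\<bar>s - t\<bar> = t - s" using True by auto
      have h: "s + \<eta> \<le> t" "t - s \<le> M1 * s + M2" using d1 d2 True by auto
      show ?thesis unfolding e by (rule main[OF s h])
    next
      case False
      then have ts: "t < s" using d1 assms(8) by auto
      have e: "min s t = t" "\<bar>s - t\<bar> = s - t" using ts by auto
      have h: "t + \<eta> \<le> s" "s - t \<le> M1 * t + M2" using d1 d2 ts by auto
      show ?thesis unfolding e u2_sym[of s t] by (rule main[OF t h])
    qed
    show "\<bar>u2 s t\<bar> \<le> CC * ((min s t) powr (-1) * \<bar>s - t\<bar> powr (\<alpha> - 1) + (min s t) powr (\<alpha> - 2))"
      if "\<bar>s - t\<bar> \<ge> 1" using B that by blast
    show "\<bar>u2 s t\<bar> \<le> CC * ((if \<alpha> < 1 then (min s t) powr (\<alpha> - 1) else 0)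
                          + (if \<alpha> \<ge> 1 then (min s t) powr (\<alpha> - 2) else 0))"
      if "\<bar>s - t\<bar> < 1" using B that by blast
  qed
qed


end
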